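(* Fix $q\in[0,1)$ and $N\in\mathbb N$. Let $\boldsymbol\zeta=(\zeta_t)_{t\ge0}$ be the multi-species ASEP on $\mathbb Z$ with $\zeta_0$ the identity; $\boldsymbol\xi=(\xi_t)_{t\ge0}$ the biased card shuffling of size $N$ with $\xi_0$ the identity of $[N]$; $\boldsymbol\lambda=(\lambda_t)_{t\ge0}$ the biased card shuffling of size $N$ started from an arbitrary deterministic $\lambda_0\in S_N$; and $\overline{\boldsymbol\xi}=(\overline\xi_t)_{t\ge0}$ the stationary biased card shuffling of size $N$ ($\overline\xi_0\sim\mathcal M_N$, independent of the Poisson processes), all four coupled under the basic coupling. For $k\in\llbracket0,N\rrbracket$ and $t\ge0$ set $\xi^k_t(x)=\mathbb 1[\xi_t(x)\le k]$, $\lambda^k_t(x)=\mathbb 1[\lambda_t(x)\le k]$, $\overline\xi^k_t(x)=\mathbb 1[\overline\xi_t(x)\le k]$ for $x\in[N]$, and $\zeta^k_t(x)=\mathbb 1[\zeta_t(x)\le k]$ for $x\in\mathbb Z$. Then almost surely, for every $k\in\llbracket0,N\rrbracket$ and $t\ge0$, \[ h\{\xi^k_t\}\le h\{\lambda^k_t\},\qquad h\{\xi^k_t\}\le h\{\zeta^k_t\},\qquad h\{\xi^k_t\}\le h\{\overline\xi^k_t\}, \] where $f\le g$ means $f(x)\le g(x)$ for all $x\in\mathbb Z$.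
   Context: $\llbracket x,y\rrbracket$ is the set of integers in $[x,y]$, $[N]=\llbracket1,N\rrbracket$, $S_N$ the bijections of $[N]$. Mallows measure: $\mathcal M_N(w)\propto q^{\#\{i<j:\,w(i)<w(j)\}}$. Multi-species dynamics on a domain $D$ ($D=\mathbb Z$ or a finite integer interval), state a bijection $\sigma:D\to D$: each nearest-neighbour pair $x,x+1\in D$ swaps its values at rate $1$ if $\sigma(x)<\sigma(x+1)$ and at rate $q$ otherwise; on $D=[N]$ this is the biased card shuffling, on $D=\mathbb Z$ the multi-species ASEP. Basic coupling: take independent Poisson point processes $\Pi_1,\Pi_q$ on $\mathbb Z\times[0,\infty)$ with intensities $1$ and $q$ (times Lebesgue $\times$ counting); at each $(x,s)\in\Pi_1$ with $x,x+1\in D$, swap the values at $x,x+1$ if just before time $s$ the value at $x$ is smaller than at $x+1$; at each $(x,s)\in\Pi_q$ with $x,x+1\in D$, swap if the value at $x$ is larger. All processes are driven by the same $\Pi_1,\Pi_q$. Height function: for $\omega:\mathbb Z\to\{0,1\}$ eventually constant as $x\to-\infty$, $h\{\omega\}:\mathbb Z\to\mathbb Z$ is defined by $h\{\omega\}(x)-h\{\omega\}(x-1)=1-2\omega(x)$, with $h\{\omega\}(x)=x$ for all small $x$ if $\omega=0$ near $-\infty$, and $h\{\omega\}(x)=-x$ for all small $x$ if $\omega=1$ near $-\infty$. For $\omega:\llbracket m,n\rrbracket\to\{0,1\}$, $h\{\omega\}$ is defined by extending $\omega$ by $0$ on $x<m$ and by $1$ on $x>n$. *)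

theory Defs
  imports "HOL-Probability.Probability"
begin

definition exp1 :: "real measure" where
  "exp1 = density lborel (\<lambda>s. ennreal (exponential_density 1 s))"

definition clock_space :: "(int \<times> nat \<Rightarrow> real) measure" where
  "clock_space = PiM UNIV (\<lambda>_. exp1)"

text \<open>The Poisson point process of intensity r (times Lebesgue x counting): at site x the
  arrival times are the partial sums of the Exp(r) variables E(x,i)/r. For r = 0 it is empty.\<close>

definition arrivals :: "real \<Rightarrow> (int \<times> nat \<Rightarrow> real) \<Rightarrow> (int \<times> real) set" where
  "arrivals r E = {(x, s). r > 0 \<and> (\<exists>n. s = (\<Sum>i\<le>n. E (x, i)) / r)}"

definition perms :: "nat \<Rightarrow> (int \<Rightarrow> int) set" where
  "perms N = {w. bij_betw w {1..int N} {1..int N} \<and> (\<forall>x. x \<notin> {1..int N} \<longrightarrow> w x = x)}"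

definition noninv :: "nat \<Rightarrow> (int \<Rightarrow> int) \<Rightarrow> nat" where
  "noninv N w = card {(i, j). i \<in> {1..int N} \<and> j \<in> {1..int N} \<and> i < j \<and> w i < w j}"

definition mallows_weight :: "nat \<Rightarrow> real \<Rightarrow> (int \<Rightarrow> int) \<Rightarrow> real" where
  "mallows_weight N q w = (if w \<in> perms N then q ^ noninv N w else 0)"

definition mallows :: "nat \<Rightarrow> real \<Rightarrow> (int \<Rightarrow> int) measure" where
  "mallows N q = density (count_space UNIV)
     (\<lambda>w. ennreal (mallows_weight N q w / (\<Sum>v\<in>perms N. mallows_weight N q v)))"

definition left_limit :: "(real \<Rightarrow> int \<Rightarrow> int) \<Rightarrow> real \<Rightarrow> int \<Rightarrow> int" where
  "left_limit \<sigma> t x = (THE v. \<exists>\<epsilon>>0. \<forall>s. t - \<epsilon> < s \<and> s < t \<longrightarrow> \<sigma> s x = v)"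

definition active :: "int set \<Rightarrow> (int \<times> real) set \<Rightarrow> (int \<times> real) set \<Rightarrow> (int \<Rightarrow> int) \<Rightarrow> real \<Rightarrow> int set" where
  "active D P1 Pq \<tau> t = {x. x \<in> D \<and> x + 1 \<in> D \<and>
      (((x, t) \<in> P1 \<and> \<tau> x < \<tau> (x + 1)) \<or> ((x, t) \<in> Pq \<and> \<tau> x > \<tau> (x + 1)))}"

definition update :: "int set \<Rightarrow> (int \<times> real) set \<Rightarrow> (int \<times> real) set \<Rightarrow> (int \<Rightarrow> int) \<Rightarrow> real \<Rightarrow> int \<Rightarrow> int" where
  "update D P1 Pq \<tau> t x =
     (if x \<in> active D P1 Pq \<tau> t then \<tau> (x + 1)
      else if x - 1 \<in> active D P1 Pq \<tau> t then \<tau> (x - 1)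
      else \<tau> x)"

text \<open>\<sigma> is a trajectory on domain D (for times t >= 0) driven by the point sets P1, Pq:
  every site is piecewise constant (right-continuous with left limits), and at each
  time t > 0 the configuration is obtained from the left limit by performing the swaps
  of the clocks ringing at time t.\<close>

definition driven :: "int set \<Rightarrow> (int \<times> real) set \<Rightarrow> (int \<times> real) set \<Rightarrow> (real \<Rightarrow> int \<Rightarrow> int) \<Rightarrow> bool" where
  "driven D P1 Pq \<sigma> \<longleftrightarrow>
     (\<forall>t\<ge>0. \<forall>x\<in>D. \<exists>\<epsilon>>0. \<forall>s. t \<le> s \<and> s < t + \<epsilon> \<longrightarrow> \<sigma> s x = \<sigma> t x) \<and>
     (\<forall>t>0. \<forall>x\<in>D. \<exists>v. \<exists>\<epsilon>>0. \<forall>s. t - \<epsilon> < s \<and> s < t \<longrightarrow> \<sigma> s x = v) \<and>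
     (\<forall>t>0. \<forall>x\<in>D. \<sigma> t x = update D P1 Pq (left_limit \<sigma> t) t x)"

text \<open>For \<omega> : Z -> {0,1} eventually constant near -inf: h(x) - h(x-1) = 1 - 2 \<omega>(x),
  h(x) = x for small x if \<omega> = 0 near -inf, h(x) = -x for small x if \<omega> = 1 near -inf.\<close>

definition height :: "(int \<Rightarrow> int) \<Rightarrow> int \<Rightarrow> int" where
  "height \<omega> x = (THE v. \<exists>y\<le>x. (\<forall>z\<le>y. \<omega> z = \<omega> y) \<and>
       v = (if \<omega> y = 0 then y else - y) + (\<Sum>z\<in>{y<..x}. 1 - 2 * \<omega> z))"

definition ext_fin :: "int \<Rightarrow> int \<Rightarrow> (int \<Rightarrow> int) \<Rightarrow> int \<Rightarrow> int" where
  "ext_fin m n \<omega> x = (if x < m then 0 else if x > n then 1 else \<omega> x)"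

definition hN :: "nat \<Rightarrow> int \<Rightarrow> (int \<Rightarrow> int) \<Rightarrow> int \<Rightarrow> int" where
  "hN N k \<sigma> = height (ext_fin 1 (int N) (\<lambda>x. if \<sigma> x \<le> k then 1 else 0))"

definition hZ :: "int \<Rightarrow> (int \<Rightarrow> int) \<Rightarrow> int \<Rightarrow> int" where
  "hZ k \<sigma> = height (\<lambda>x. if \<sigma> x \<le> k then 1 else 0)"

end

theory Submission
  imports Defs
begin



lemma sum_split_gAM:
  fixes f :: "int \<Rightarrow> int"
  assumes "a \<le> b" "b \<le> c"
  shows "(\<Sum>z\<in>{a<..c}. f z) = (\<Sum>z\<in>{a<..b}. f z) + (\<Sum>z\<in>{b<..c}. f z)"
proof -
  have "{a<..c} = {a<..b} \<union> {b<..c}" using assms by auto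
  moreover have "{a<..b} \<inter> {b<..c} = {}" by auto
  ultimately show ?thesis by (simp add: sum.union_disjoint)
qed

lemma sum_const_gAM:
  fixes f :: "int \<Rightarrow> int"
  assumes "\<forall>z\<in>{a<..b}. f z = v" "a \<le> b"
  shows "(\<Sum>z\<in>{a<..b}. f z) = (b - a) * v"
proof -
  have "(\<Sum>z\<in>{a<..b}. f z) = (\<Sum>z\<in>{a<..b}. v)" using assms by simp
  also have "\<dots> = (b - a) * v" using assms by simp
  finally show ?thesis .
qed

lemma height_formula:
  assumes c: "\<forall>z\<le>y0. \<omega> z = \<omega> y0" and v: "\<omega> y0 = 0 \<or> \<omega> y0 = 1"
    and y: "y \<le> y0" "y \<le> x"
  shows "height \<omega> x = (if \<omega> y0 = 0 then y else - y) + (\<Sum>z\<in>{y<..x}. 1 - 2 * \<omega> z)"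
  unfolding height_def
proof (rule the_equality)
  have "\<omega> y = \<omega> y0" by (rule c[rule_format, OF y(1)])
  then show "\<exists>y'\<le>x. (\<forall>z\<le>y'. \<omega> z = \<omega> y') \<and>
     (if \<omega> y0 = 0 then y else - y) + (\<Sum>z\<in>{y<..x}. 1 - 2 * \<omega> z) =
     (if \<omega> y' = 0 then y' else - y') + (\<Sum>z\<in>{y'<..x}. 1 - 2 * \<omega> z)"
  proof (intro exI[of _ y] conjI)
    show "y \<le> x" by (rule y(2))
    show "\<forall>z\<le>y. \<omega> z = \<omega> y"
    proof (intro allI impI)
      fix z assume "z \<le> y"
      then have "\<omega> z = \<omega> y0" using y(1) by (intro c[rule_format]) simp
      then show "\<omega> z = \<omega> y" using \<open>\<omega> y = \<omega> y0\<close> by simp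
    qed
  qed (simp add: \<open>\<omega> y = \<omega> y0\<close>)
next
  fix w assume "\<exists>y'\<le>x. (\<forall>z\<le>y'. \<omega> z = \<omega> y') \<and>
     w = (if \<omega> y' = 0 then y' else - y') + (\<Sum>z\<in>{y'<..x}. 1 - 2 * \<omega> z)"
  then obtain y' where y': "y' \<le> x" "\<forall>z\<le>y'. \<omega> z = \<omega> y'"
    and w: "w = (if \<omega> y' = 0 then y' else - y') + (\<Sum>z\<in>{y'<..x}. 1 - 2 * \<omega> z)" by blast
  show "w = (if \<omega> y0 = 0 then y else - y) + (\<Sum>z\<in>{y<..x}. 1 - 2 * \<omega> z)"
  proof (cases "y' \<le> y")
    case True
    have e: "\<omega> y' = \<omega> y0" using y True by (intro c[rule_format]) simp
    have s: "(\<Sum>z\<in>{y'<..x}. 1 - 2 * \<omega> z) = (\<Sum>z\<in>{y'<..y}. 1 - 2 * \<omega> z) + (\<Sum>z\<in>{y<..x}. 1 - 2 * \<omega> z)"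
      using True y by (intro sum_split_gAM) auto
    have s2: "(\<Sum>z\<in>{y'<..y}. 1 - 2 * \<omega> z) = (y - y') * (1 - 2 * \<omega> y0)"
    proof (rule sum_const_gAM)
      show "\<forall>z\<in>{y'<..y}. 1 - 2 * \<omega> z = 1 - 2 * \<omega> y0"
      proof
        fix z assume "z \<in> {y'<..y}"
        then have "z \<le> y0" using y by auto
        then have "\<omega> z = \<omega> y0" by (rule c[rule_format])
        then show "1 - 2 * \<omega> z = 1 - 2 * \<omega> y0" by simp
      qed
    qed (use True in auto)
    from v show ?thesis
    proof
      assume "\<omega> y0 = 0" then show ?thesis using w s s2 e by simp
    next
      assume "\<omega> y0 = 1" then show ?thesis using w s s2 e by (simp add: algebra_simps)
    qed
  next
    case False
    have e: "\<omega> y' = \<omega> y0"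
    proof (cases "y0 \<le> y'")
      case True then show ?thesis using y'(2)[rule_format, OF True] by simp
    next
      case False then have "y' \<le> y0" by simp
      then show ?thesis by (rule c[rule_format])
    qed
    have s: "(\<Sum>z\<in>{y<..x}. 1 - 2 * \<omega> z) = (\<Sum>z\<in>{y<..y'}. 1 - 2 * \<omega> z) + (\<Sum>z\<in>{y'<..x}. 1 - 2 * \<omega> z)"
      using False y' by (intro sum_split_gAM) auto
    have s2: "(\<Sum>z\<in>{y<..y'}. 1 - 2 * \<omega> z) = (y' - y) * (1 - 2 * \<omega> y0)"
    proof (rule sum_const_gAM)
      show "\<forall>z\<in>{y<..y'}. 1 - 2 * \<omega> z = 1 - 2 * \<omega> y0"
      proof
        fix z assume "z \<in> {y<..y'}"
        then have "z \<le> y'" by auto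
        then have "\<omega> z = \<omega> y'" by (rule y'(2)[rule_format])
        then show "1 - 2 * \<omega> z = 1 - 2 * \<omega> y0" using e by simp
      qed
    qed (use False in auto)
    from v show ?thesis
    proof
      assume "\<omega> y0 = 0" then show ?thesis using w s s2 e by simp
    next
      assume "\<omega> y0 = 1" then show ?thesis using w s s2 e by (simp add: algebra_simps)
    qed
  qed
qed

lemma height_rec:
  assumes c: "\<forall>z\<le>y0. \<omega> z = \<omega> y0" and v: "\<omega> y0 = 0 \<or> \<omega> y0 = 1"
  shows "height \<omega> x = height \<omega> (x - 1) + 1 - 2 * \<omega> x"
proof -
  define y where "y = min y0 (x - 1)"
  have "height \<omega> x = (if \<omega> y0 = 0 then y else - y) + (\<Sum>z\<in>{y<..x}. 1 - 2 * \<omega> z)"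
    by (rule height_formula[OF c v]) (auto simp: y_def)
  moreover have "height \<omega> (x-1) = (if \<omega> y0 = 0 then y else - y) + (\<Sum>z\<in>{y<..x-1}. 1 - 2 * \<omega> z)"
    by (rule height_formula[OF c v]) (auto simp: y_def)
  moreover have "{y<..x} = insert x {y<..x-1}" by (auto simp: y_def)
  ultimately show ?thesis by simp
qed

lemma height_low:
  assumes c: "\<forall>z\<le>y0. \<omega> z = \<omega> y0" and v: "\<omega> y0 = 0 \<or> \<omega> y0 = 1" and xl: "x \<le> y0"
  shows "height \<omega> x = (if \<omega> y0 = 0 then x else - x)"
  using height_formula[OF c v, of x x] xl by simp

definition srt :: "int \<Rightarrow> bool \<Rightarrow> (int \<Rightarrow> int) \<Rightarrow> int \<Rightarrow> int" where
  "srt e up \<omega> = (\<lambda>z. if z = e then (if up then min (\<omega> e) (\<omega> (e+1)) else max (\<omega> e) (\<omega> (e+1)))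
     else if z = e + 1 then (if up then max (\<omega> e) (\<omega> (e+1)) else min (\<omega> e) (\<omega> (e+1))) else \<omega> z)"

lemma height_srt:
  assumes c: "\<forall>z\<le>y0. \<omega> z = \<omega> y0" and v: "\<forall>z. \<omega> z = 0 \<or> \<omega> z = 1"
  shows "height (srt e up \<omega>) x = (if x = e then height \<omega> (e-1) + 1 - 2 * srt e up \<omega> e else height \<omega> x)"
proof -
  define y where "y = min y0 (e - 1)"
  let ?w = "srt e up \<omega>"
  have yle: "y \<le> y0" by (simp add: y_def)
  have cy: "\<forall>z\<le>y. \<omega> z = \<omega> y"
  proof (intro allI impI)
    fix z assume "z \<le> y"
    then have "\<omega> z = \<omega> y0" "\<omega> y = \<omega> y0" using c yle by (meson order_trans, meson order_refl)
    then show "\<omega> z = \<omega> y" by simp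
  qed
  have vy: "\<omega> y = 0 \<or> \<omega> y = 1" using v by blast
  have ww: "\<forall>z\<le>y. ?w z = \<omega> z" by (auto simp: srt_def y_def)
  have cw: "\<forall>z\<le>y. ?w z = ?w y" using cy ww by (metis order_refl)
  have vw: "?w y = 0 \<or> ?w y = 1" using ww vy by (metis order_refl)
  have below: "height ?w x = height \<omega> x" if "x < e" for x
  proof -
    define y' where "y' = min y x"
    have "height ?w x = (if ?w y = 0 then y' else - y') + (\<Sum>z\<in>{y'<..x}. 1 - 2 * ?w z)"
      by (rule height_formula[OF cw vw]) (auto simp: y'_def)
    moreover have "height \<omega> x = (if \<omega> y = 0 then y' else - y') + (\<Sum>z\<in>{y'<..x}. 1 - 2 * \<omega> z)"
      by (rule height_formula[OF cy vy]) (auto simp: y'_def)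
    moreover have "(\<Sum>z\<in>{y'<..x}. 1 - 2 * ?w z) = (\<Sum>z\<in>{y'<..x}. 1 - 2 * \<omega> z)"
      using that by (intro sum.cong) (auto simp: srt_def)
    moreover have "?w y = \<omega> y" using ww by simp
    ultimately show ?thesis by simp
  qed
  have recw: "height ?w z = height ?w (z - 1) + 1 - 2 * ?w z" for z
    by (rule height_rec[OF cw vw])
  have rec: "height \<omega> z = height \<omega> (z - 1) + 1 - 2 * \<omega> z" for z
    by (rule height_rec[OF cy vy])
  have atE: "height ?w e = height \<omega> (e-1) + 1 - 2 * ?w e"
    using recw[of e] below[of "e-1"] by simp
  have sumeq: "?w e + ?w (e+1) = \<omega> e + \<omega> (e+1)" by (auto simp: srt_def)
  have atE1: "height ?w (e+1) = height \<omega> (e+1)"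
    using recw[of "e+1"] atE rec[of "e+1"] rec[of e] sumeq by simp
  have above: "height ?w x = height \<omega> x" if "x \<ge> e + 1" for x
    using that
  proof (induction x rule: int_ge_induct)
    case base then show ?case by (rule atE1)
  next
    case (step i)
    have "?w (i+1) = \<omega> (i+1)" using step.hyps by (auto simp: srt_def)
    then show ?case using recw[of "i+1"] rec[of "i+1"] step.IH by simp
  qed
  show ?thesis
  proof (cases "x < e")
    case True then show ?thesis using below by simp
  next
    case False
    then show ?thesis using atE above by (cases "x = e") auto
  qed
qed

lemma mono_arith:
  fixes a b c d hm gm :: int
  assumes "a = 0 \<or> a = 1" "b = 0 \<or> b = 1" "c = 0 \<or> c = 1" "d = 0 \<or> d = 1"
    "hm \<le> gm" "hm + 2 - 2*a - 2*b \<le> gm + 2 - 2*c - 2*d"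
  shows "hm + 1 - 2 * (if up then min a b else max a b) \<le> gm + 1 - 2 * (if up then min c d else max c d)"
  using assms(1-4)
  apply (elim disjE)
  using assms(5,6) by (cases up; simp)+

lemma frozen_arith:
  fixes a b c d hm gm he ge hp gp :: int
  assumes "a = 0 \<or> a = 1" "b = 0 \<or> b = 1" "c = 0 \<or> c = 1" "d = 0 \<or> d = 1"
    "he = hm + 1 - 2*a" "hp = he + 1 - 2*b" "ge = gm + 1 - 2*c" "gp = ge + 1 - 2*d"
    "hm \<le> gm" "he \<le> ge" "hp \<le> gp"
    "up \<or> a = 1 \<or> b = 0 \<or> hm + 2 \<le> gm \<or> hp + 2 \<le> gp"
  shows "he \<le> gm + 1 - 2 * (if up then min c d else max c d)"
  using assms(1-4)
  apply (elim disjE)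
  using assms(5-12) by (cases up; simp; linarith)+



definition ind :: "int \<Rightarrow> (int \<Rightarrow> int) \<Rightarrow> int \<Rightarrow> int" where
  "ind k \<sigma> = (\<lambda>x. if \<sigma> x \<le> k then 1 else 0)"

definition swp :: "int \<Rightarrow> (int \<Rightarrow> int) \<Rightarrow> int \<Rightarrow> int" where
  "swp e \<tau> = (\<lambda>z. if z = e then \<tau> (e+1) else if z = e + 1 then \<tau> e else \<tau> z)"

definition stepF :: "int set \<Rightarrow> int \<Rightarrow> bool \<Rightarrow> (int \<Rightarrow> int) \<Rightarrow> int \<Rightarrow> int" where
  "stepF F e up \<tau> = (if e \<in> F \<and> e + 1 \<in> F \<and> (if up then \<tau> e < \<tau> (e+1) else \<tau> (e+1) < \<tau> e)
     then swp e \<tau> else \<tau>)"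

lemma hN_ind: "hN N k \<sigma> = height (ext_fin 1 (int N) (ind k \<sigma>))"
  unfolding hN_def ind_def ..

lemma hZ_ind: "hZ k \<sigma> = height (ind k \<sigma>)"
  unfolding hZ_def ind_def ..

lemma ind_stepF:
  assumes "\<tau> e \<noteq> \<tau> (e+1)" "e \<in> F" "e + 1 \<in> F"
  shows "ind k (stepF F e up \<tau>) = srt e up (ind k \<tau>)"
  using assms by (cases up) (auto simp: ind_def stepF_def srt_def swp_def fun_eq_iff)

lemma stepF_out: "\<not> (e \<in> F \<and> e + 1 \<in> F) \<Longrightarrow> stepF F e up \<tau> = \<tau>"
  by (auto simp: stepF_def)

lemma stepF_outside: "z \<notin> F \<Longrightarrow> stepF F e up \<tau> z = \<tau> z"
  by (auto simp: stepF_def swp_def)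

lemma ext_srt:
  assumes "1 \<le> e" "e + 1 \<le> n"
  shows "ext_fin 1 n (srt e up \<omega>) = srt e up (ext_fin 1 n \<omega>)"
  using assms by (auto simp: ext_fin_def srt_def fun_eq_iff)

lemma bij_swp:
  assumes "bij_betw \<tau> F F" "e \<in> F" "e + 1 \<in> F"
  shows "bij_betw (swp e \<tau>) F F"
proof -
  define p where "p = (\<lambda>z::int. if z = e then e+1 else if z = e + 1 then e else z)"
  have "swp e \<tau> = \<tau> \<circ> p" by (auto simp: swp_def p_def fun_eq_iff)
  moreover have "bij_betw p F F"
    by (rule bij_betw_byWitness[where f'=p]) (use assms in \<open>auto simp: p_def\<close>)
  ultimately show ?thesis using assms(1) by (simp add: bij_betw_trans)
qed

lemma bij_stepF: "bij_betw \<tau> F F \<Longrightarrow> bij_betw (stepF F e up \<tau>) F F"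
  by (auto simp: stepF_def intro: bij_swp)

lemma card_bij_le:
  assumes "bij_betw \<sigma> A A"
  shows "card {z\<in>A. \<sigma> z \<le> k} = card {y\<in>A. y \<le> (k::int)}"
proof -
  have "bij_betw \<sigma> {z\<in>A. \<sigma> z \<le> k} {y\<in>A. y \<le> k}"
    using assms unfolding bij_betw_def inj_on_def by auto
  then show ?thesis by (rule bij_betw_same_card)
qed

lemma card_le_k:
  assumes "a \<le> k" "k \<le> b"
  shows "card {y\<in>{a<..b}. y \<le> (k::int)} = nat (k - a)"
proof -
  have "{y\<in>{a<..b}. y \<le> k} = {a<..k}" using assms by auto
  then show ?thesis by simp
qed

lemma sum_ind_card:
  assumes "finite A"
  shows "(\<Sum>z\<in>A. (if P z then 1 else 0)::int) = int (card {z\<in>A. P z})"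
proof -
  have "A \<inter> Collect P = {z\<in>A. P z}" by auto
  then show ?thesis using assms by (simp add: sum.If_cases)
qed

lemma sum_one_minus:
  fixes \<omega> :: "int \<Rightarrow> int"
  assumes "y \<le> x"
  shows "(\<Sum>z\<in>{y<..x}. 1 - 2 * \<omega> z) = (x - y) - 2 * (\<Sum>z\<in>{y<..x}. \<omega> z)"
  using assms by (simp add: sum_subtractf sum_distrib_left)

context
  fixes N :: nat and k :: int and u :: "int \<Rightarrow> int"
begin

definition "wN = ext_fin 1 (int N) (ind k u)"

lemma wN_01: "wN z = 0 \<or> wN z = 1"
  by (auto simp: wN_def ext_fin_def ind_def)

lemma wN_const: "\<forall>z\<le>0. wN z = wN 0"
  by (auto simp: wN_def ext_fin_def)

lemma wN0: "wN 0 = 0" by (simp add: wN_def ext_fin_def)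

lemma hN_low: "x \<le> 0 \<Longrightarrow> hN N k u x = x"
  using height_low[OF wN_const, of x] wN_01[of 0] wN0 by (simp add: hN_ind wN_def[symmetric])

lemma hN_pos: "0 \<le> x \<Longrightarrow> hN N k u x = x - 2 * (\<Sum>z\<in>{0<..x}. wN z)"
  using height_formula[OF wN_const, of 0 x] wN_01[of 0] wN0 sum_one_minus[of 0 x wN]
  by (simp add: hN_ind wN_def[symmetric])

lemma sum_wN_mid:
  assumes "0 \<le> x" "x \<le> int N"
  shows "(\<Sum>z\<in>{0<..x}. wN z) = int (card {z\<in>{0<..x}. u z \<le> k})"
proof -
  have "(\<Sum>z\<in>{0<..x}. wN z) = (\<Sum>z\<in>{0<..x}. (if u z \<le> k then 1 else 0))"
    using assms by (intro sum.cong) (auto simp: wN_def ext_fin_def ind_def)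
  then show ?thesis by (simp add: sum_ind_card)
qed

lemma sum_wN_high:
  assumes "int N \<le> x"
  shows "(\<Sum>z\<in>{0<..x}. wN z) = (\<Sum>z\<in>{0<..int N}. wN z) + (x - int N)"
proof -
  have "(\<Sum>z\<in>{0<..x}. wN z) = (\<Sum>z\<in>{0<..int N}. wN z) + (\<Sum>z\<in>{int N<..x}. wN z)"
    using assms by (intro sum_split_gAM) auto
  moreover have "(\<Sum>z\<in>{int N<..x}. wN z) = (x - int N) * 1"
    using assms by (intro sum_const_gAM) (auto simp: wN_def ext_fin_def)
  ultimately show ?thesis by simp
qed

lemma hN_bounds:
  assumes bij: "bij_betw u {0<..int N} {0<..int N}" and k: "0 \<le> k" "k \<le> int N"
  shows "hN N k u x \<ge> (if x \<le> 0 then x else if x \<le> int N then max (-x) (x - 2*k) else 2 * int N - 2*k - x)"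
    and "x \<ge> int N \<Longrightarrow> hN N k u x = 2 * int N - 2*k - x"
proof -
  have cardN: "int (card {z\<in>{0<..int N}. u z \<le> k}) = k"
    using card_bij_le[OF bij, of k] card_le_k[of 0 k "int N"] k by simp
  have mid: "hN N k u x \<ge> max (-x) (x - 2*k)" if "0 \<le> x" "x \<le> int N" for x
  proof -
    have c1: "card {z\<in>{0<..x}. u z \<le> k} \<le> card {0<..x}" by (rule card_mono) auto
    have c2: "card {z\<in>{0<..x}. u z \<le> k} \<le> card {z\<in>{0<..int N}. u z \<le> k}"
    proof (rule card_mono)
      show "finite {z\<in>{0<..int N}. u z \<le> k}" by (rule finite_subset[of _ "{0<..int N}"]) auto
    qed (use that in auto)
    show ?thesis using hN_pos[of x] sum_wN_mid[of x] that c1 c2 cardN by simp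
  qed
  have high: "hN N k u x = 2 * int N - 2*k - x" if "x \<ge> int N" for x
    using hN_pos[of x] sum_wN_high[of x] sum_wN_mid[of "int N"] that cardN by simp
  show "x \<ge> int N \<Longrightarrow> hN N k u x = 2 * int N - 2*k - x" by (rule high)
  show "hN N k u x \<ge> (if x \<le> 0 then x else if x \<le> int N then max (-x) (x - 2*k) else 2 * int N - 2*k - x)"
    using hN_low[of x] mid[of x] high[of x] by auto
qed

lemma hN_idv:
  assumes idv: "\<forall>z\<in>{0<..int N}. u z = z" and k: "0 \<le> k" "k \<le> int N"
  shows "hN N k u x \<le> (if x \<le> 0 then x else if x \<le> int N then max (-x) (x - 2*k) else 2 * int N - 2*k - x)"
proof -
  have cnt: "card {z\<in>{0<..x}. u z \<le> k} = nat (min x k)" if "0 \<le> x" "x \<le> int N" for x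
  proof -
    have "{z\<in>{0<..x}. u z \<le> k} = {0<..min x k}" using idv that by auto
    then show ?thesis by simp
  qed
  have high: "hN N k u x = 2 * int N - 2*k - x" if "x \<ge> int N" for x
    using hN_pos[of x] sum_wN_high[of x] sum_wN_mid[of "int N"] that cnt[of "int N"] k by simp
  show ?thesis
  proof (cases "x \<le> 0")
    case True then show ?thesis using hN_low by simp
  next
    case False
    show ?thesis
    proof (cases "x \<le> int N")
      case True
      then show ?thesis using False hN_pos[of x] sum_wN_mid[of x] cnt[of x] k by (auto simp: max_def min_def)
    next
      case F2: False then show ?thesis using high[of x] False by simp
    qed
  qed
qed

end

lemma hZ_bounds:
  fixes v :: "int \<Rightarrow> int"
  assumes bij: "bij_betw v {a<..b} {a<..b}" and out: "\<forall>z. z \<notin> {a<..b} \<longrightarrow> v z = z"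
    and k: "a \<le> k" "k \<le> b"
  shows "hZ k v x \<ge> -x" "hZ k v x \<ge> x - 2 * k"
proof -
  let ?w = "ind k v"
  have w01: "?w z = 0 \<or> ?w z = 1" for z by (auto simp: ind_def)
  have wa: "?w z = 1" if "z \<le> a" for z using out that k by (auto simp: ind_def)
  have c: "\<forall>z\<le>a. ?w z = ?w a" using wa by simp
  have low: "hZ k v x = - x" if "x \<le> a" for x
    using height_low[OF c w01 that] wa[of a] by (simp add: hZ_ind)
  have hi: "hZ k v x = -a + (x - a) - 2 * (\<Sum>z\<in>{a<..x}. ?w z)" if "a \<le> x" for x
    using height_formula[OF c w01, of a x] that wa[of a] sum_one_minus[of a x ?w]
    by (simp add: hZ_ind)
  have s1: "(\<Sum>z\<in>{a<..x}. ?w z) \<le> x - a" if "a \<le> x" for x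
  proof -
    have "(\<Sum>z\<in>{a<..x}. ?w z) \<le> (\<Sum>z\<in>{a<..x}. 1)" by (rule sum_mono) (auto simp: ind_def)
    then show ?thesis using that by simp
  qed
  have s2: "(\<Sum>z\<in>{a<..x}. ?w z) \<le> k - a" if "a \<le> x" for x
  proof -
    have "(\<Sum>z\<in>{a<..x}. ?w z) = int (card {z\<in>{a<..x}. v z \<le> k})"
      by (simp add: ind_def sum_ind_card)
    also have "card {z\<in>{a<..x}. v z \<le> k} \<le> card {z\<in>{a<..b}. v z \<le> k}"
    proof (rule card_mono)
      show "{z \<in> {a<..x}. v z \<le> k} \<subseteq> {z \<in> {a<..b}. v z \<le> k}"
      proof
        fix z assume z: "z \<in> {z \<in> {a<..x}. v z \<le> k}"
        show "z \<in> {z \<in> {a<..b}. v z \<le> k}"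
        proof (cases "z \<le> b")
          case True then show ?thesis using z by auto
        next
          case False then have "v z = z" using out by auto
          then show ?thesis using z False k by auto
        qed
      qed
    qed (rule finite_subset[of _ "{a<..b}"], auto)
    also have "card {z\<in>{a<..b}. v z \<le> k} = nat (k - a)"
      using card_bij_le[OF bij, of k] card_le_k[OF k] by simp
    finally show ?thesis using k by linarith
  qed
  show "hZ k v x \<ge> -x"
  proof (cases "x \<le> a")
    case True then show ?thesis using low by simp
  next
    case False then show ?thesis using hi[of x] s1[of x] by simp
  qed
  show "hZ k v x \<ge> x - 2 * k"
  proof (cases "x \<le> a")
    case True then show ?thesis using low[of x] k by simp
  next
    case False then show ?thesis using hi[of x] s2[of x] by simp
  qed
qed




lemma height_mono_srt:
  assumes c1: "\<forall>z\<le>y1. \<omega>1 z = \<omega>1 y1" and v1: "\<forall>z. \<omega>1 z = 0 \<or> \<omega>1 z = 1"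
    and c2: "\<forall>z\<le>y2. \<omega>2 z = \<omega>2 y2" and v2: "\<forall>z. \<omega>2 z = 0 \<or> \<omega>2 z = 1"
    and le: "\<forall>x. height \<omega>1 x \<le> height \<omega>2 x"
  shows "height (srt e up \<omega>1) x \<le> height (srt e up \<omega>2) x"
proof (cases "x = e")
  case False
  then show ?thesis using height_srt[OF c1 v1, of e up x] height_srt[OF c2 v2, of e up x] le by simp
next
  case True
  have r1: "height \<omega>1 (e+1) = height \<omega>1 (e-1) + 2 - 2 * \<omega>1 e - 2 * \<omega>1 (e+1)"
    using height_rec[OF c1, of "e+1"] height_rec[OF c1, of e] v1 by simp
  have r2: "height \<omega>2 (e+1) = height \<omega>2 (e-1) + 2 - 2 * \<omega>2 e - 2 * \<omega>2 (e+1)"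
    using height_rec[OF c2, of "e+1"] height_rec[OF c2, of e] v2 by simp
  have m: "height \<omega>1 (e-1) + 1 - 2 * (if up then min (\<omega>1 e) (\<omega>1 (e+1)) else max (\<omega>1 e) (\<omega>1 (e+1)))
      \<le> height \<omega>2 (e-1) + 1 - 2 * (if up then min (\<omega>2 e) (\<omega>2 (e+1)) else max (\<omega>2 e) (\<omega>2 (e+1)))"
  proof (rule mono_arith[OF v1[rule_format] v1[rule_format] v2[rule_format] v2[rule_format]])
    show "height \<omega>1 (e - 1) \<le> height \<omega>2 (e - 1)" using le by simp
    have "height \<omega>1 (e + 1) \<le> height \<omega>2 (e + 1)" using le by simp
    then show "height \<omega>1 (e - 1) + 2 - 2 * \<omega>1 e - 2 * \<omega>1 (e + 1)
         \<le> height \<omega>2 (e - 1) + 2 - 2 * \<omega>2 e - 2 * \<omega>2 (e + 1)" using r1 r2 by linarith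
  qed
  show ?thesis using True height_srt[OF c1 v1, of e up e] height_srt[OF c2 v2, of e up e] m
    by (simp add: srt_def)
qed

lemma height_frozen:
  assumes c1: "\<forall>z\<le>y1. \<omega>1 z = \<omega>1 y1" and v1: "\<forall>z. \<omega>1 z = 0 \<or> \<omega>1 z = 1"
    and c2: "\<forall>z\<le>y2. \<omega>2 z = \<omega>2 y2" and v2: "\<forall>z. \<omega>2 z = 0 \<or> \<omega>2 z = 1"
    and le: "\<forall>x. height \<omega>1 x \<le> height \<omega>2 x"
    and cond: "up \<or> \<omega>1 e = 1 \<or> \<omega>1 (e+1) = 0 \<or> height \<omega>1 (e-1) + 2 \<le> height \<omega>2 (e-1)
       \<or> height \<omega>1 (e+1) + 2 \<le> height \<omega>2 (e+1)"
  shows "height \<omega>1 x \<le> height (srt e up \<omega>2) x"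
proof (cases "x = e")
  case False
  then show ?thesis using height_srt[OF c2 v2, of e up x] le by simp
next
  case True
  have r1: "height \<omega>1 e = height \<omega>1 (e-1) + 1 - 2 * \<omega>1 e"
    "height \<omega>1 (e+1) = height \<omega>1 e + 1 - 2 * \<omega>1 (e+1)"
    using height_rec[OF c1, of "e+1"] height_rec[OF c1, of e] v1 by simp_all
  have r2: "height \<omega>2 e = height \<omega>2 (e-1) + 1 - 2 * \<omega>2 e"
    "height \<omega>2 (e+1) = height \<omega>2 e + 1 - 2 * \<omega>2 (e+1)"
    using height_rec[OF c2, of "e+1"] height_rec[OF c2, of e] v2 by simp_all
  have m: "height \<omega>1 e \<le> height \<omega>2 (e-1) + 1 - 2 * (if up then min (\<omega>2 e) (\<omega>2 (e+1)) else max (\<omega>2 e) (\<omega>2 (e+1)))"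
  proof (rule frozen_arith[OF v1[rule_format] v1[rule_format] v2[rule_format] v2[rule_format] r1 r2])
    show "height \<omega>1 (e - 1) \<le> height \<omega>2 (e - 1)" "height \<omega>1 e \<le> height \<omega>2 e"
      "height \<omega>1 (e + 1) \<le> height \<omega>2 (e + 1)" using le by simp_all
  qed (use cond in simp_all)
  show ?thesis using True height_srt[OF c2 v2, of e up e] m
    by (simp add: srt_def)
qed

lemma ind01: "\<forall>z. ind k v z = 0 \<or> ind k v z = 1" by (auto simp: ind_def)

lemma stepP:
  assumes bu: "bij_betw u {0<..int N} {0<..int N}" and bv: "bij_betw v {0<..int N} {0<..int N}"
    and cmp: "\<forall>k\<in>{0..int N}. \<forall>x. hN N k u x \<le> hN N k v x"
  shows "\<forall>k\<in>{0..int N}. \<forall>x. hN N k (stepF {0<..int N} e up u) x \<le> hN N k (stepF {0<..int N} e up v) x"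
proof (cases "e \<in> {0<..int N} \<and> e + 1 \<in> {0<..int N}")
  case False then show ?thesis using cmp by (simp add: stepF_out)
next
  case True
  have nu: "u e \<noteq> u (e+1)" using bu True unfolding bij_betw_def inj_on_def by force
  have nv: "v e \<noteq> v (e+1)" using bv True unfolding bij_betw_def inj_on_def by force
  show ?thesis
  proof (intro ballI allI)
    fix k x assume k: "k \<in> {0..int N}"
    have eqs: "hN N k (stepF {0<..int N} e up u) = height (srt e up (wN N k u))"
       "hN N k (stepF {0<..int N} e up v) = height (srt e up (wN N k v))"
      using True nu nv by (simp_all add: hN_ind ind_stepF ext_srt wN_def)
    have le: "\<forall>x. height (wN N k u) x \<le> height (wN N k v) x"
      using cmp k by (simp add: hN_ind wN_def)
    show "hN N k (stepF {0<..int N} e up u) x \<le> hN N k (stepF {0<..int N} e up v) x"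
      unfolding eqs
      by (rule height_mono_srt[OF wN_const _ wN_const _ le]) (simp_all add: wN_01)
  qed
qed

lemma indv_const:
  assumes out: "\<forall>z. z \<notin> {a<..b} \<longrightarrow> v z = z" and "a \<le> k"
  shows "\<forall>z\<le>a. ind k v z = ind k v a"
  using assms by (auto simp: ind_def)

lemma stepQ:
  assumes bu: "bij_betw u {0<..int N} {0<..int N}" and bv: "bij_betw v {a<..b} {a<..b}"
    and out: "\<forall>z. z \<notin> {a<..b} \<longrightarrow> v z = z" and ab: "a \<le> 0" "int N \<le> b"
    and cmp: "\<forall>k\<in>{0..int N}. \<forall>x. hN N k u x \<le> hZ k v x"
  shows "\<forall>k\<in>{0..int N}. \<forall>x. hN N k (stepF {0<..int N} e up u) x \<le> hZ k (stepF {a<..b} e up v) x"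
proof (intro ballI allI)
  fix k x assume k: "k \<in> {0..int N}"
  have ck: "\<forall>z\<le>a. ind k v z = ind k v a" using out ab k by (intro indv_const) auto
  have le: "\<forall>x. height (wN N k u) x \<le> height (ind k v) x"
    using cmp k by (simp add: hN_ind hZ_ind wN_def)
  have nv: "v e \<noteq> v (e+1)" if "e \<in> {a<..b}" "e+1 \<in> {a<..b}"
    using bv that unfolding bij_betw_def inj_on_def by force
  show "hN N k (stepF {0<..int N} e up u) x \<le> hZ k (stepF {a<..b} e up v) x"
  proof (cases "e \<in> {0<..int N} \<and> e + 1 \<in> {0<..int N}")
    case True
    have nu: "u e \<noteq> u (e+1)" using bu True unfolding bij_betw_def inj_on_def by force
    have T2: "e \<in> {a<..b}" "e+1 \<in> {a<..b}" using True ab by auto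
    have eqs: "hN N k (stepF {0<..int N} e up u) = height (srt e up (wN N k u))"
       "hZ k (stepF {a<..b} e up v) = height (srt e up (ind k v))"
      using True T2 nu nv[OF T2] by (simp_all add: hN_ind hZ_ind ind_stepF ext_srt wN_def)
    show ?thesis unfolding eqs
      by (rule height_mono_srt[OF wN_const _ ck _ le]) (simp_all add: wN_01 ind01)
  next
    case F1: False
    have equ: "stepF {0<..int N} e up u = u" using F1 by (rule stepF_out)
    show ?thesis
    proof (cases "e \<in> {a<..b} \<and> e + 1 \<in> {a<..b}")
      case False then show ?thesis using equ cmp k by (simp add: stepF_out)
    next
      case T2: True
      have eqs: "hZ k (stepF {a<..b} e up v) = height (srt e up (ind k v))"
        using T2 nv by (simp add: hZ_ind ind_stepF)
      have hb: "hZ k v y \<ge> -y" "hZ k v y \<ge> y - 2 * k" for y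
        using hZ_bounds[OF bv out, of k y] ab k by auto
      have cond: "up \<or> wN N k u e = 1 \<or> wN N k u (e+1) = 0 \<or> height (wN N k u) (e-1) + 2 \<le> height (ind k v) (e-1)
         \<or> height (wN N k u) (e+1) + 2 \<le> height (ind k v) (e+1)"
      proof -
        consider "e < 0" | "e = 0" | "e > int N" | "e = int N" "e > 0"
          using F1 by force
        then show ?thesis
        proof cases
          case 1 then show ?thesis by (auto simp: wN_def ext_fin_def)
        next
          case 2
          have "height (wN N k u) (e-1) = -1" using 2 hN_low[of "-1" N k u] by (simp add: hN_ind wN_def)
          moreover have "height (ind k v) (e-1) \<ge> 1" using 2 hb(1)[of "-1"] by (simp add: hZ_ind)
          ultimately show ?thesis by simp
        next
          case 3 then show ?thesis by (auto simp: wN_def ext_fin_def)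
        next
          case 4
          have "height (wN N k u) (e+1) = int N - 2*k - 1"
            using 4 hN_bounds(2)[OF bu, of k "e+1"] k by (simp add: hN_ind wN_def)
          moreover have "height (ind k v) (e+1) \<ge> int N + 1 - 2*k" using 4 hb(2)[of "e+1"] by (simp add: hZ_ind)
          ultimately show ?thesis by simp
        qed
      qed
      show ?thesis unfolding eqs equ hN_ind wN_def[symmetric]
        by (rule height_frozen[OF wN_const _ ck _ le cond]) (simp_all add: wN_01 ind01)
    qed
  qed
qed




definition restr :: "int set \<Rightarrow> (int \<Rightarrow> int) \<Rightarrow> int \<Rightarrow> int" where
  "restr F \<sigma> = (\<lambda>z. if z \<in> F then \<sigma> z else z)"

lemma restr_out: "z \<notin> F \<Longrightarrow> restr F \<sigma> z = z" by (simp add: restr_def)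
lemma restr_in: "z \<in> F \<Longrightarrow> restr F \<sigma> z = \<sigma> z" by (simp add: restr_def)

lemma finite_eps:
  fixes Q :: "'b \<Rightarrow> real \<Rightarrow> bool"
  assumes "finite F" "\<forall>x\<in>F. \<exists>\<epsilon>>0. Q x \<epsilon>"
    and mono: "\<forall>x \<epsilon> \<epsilon>'. Q x \<epsilon> \<longrightarrow> 0 < \<epsilon>' \<longrightarrow> \<epsilon>' \<le> \<epsilon> \<longrightarrow> Q x \<epsilon>'"
  shows "\<exists>\<epsilon>>0. \<forall>x\<in>F. Q x \<epsilon>"
  using assms(1,2)
proof (induction F rule: finite_induct)
  case empty then show ?case by (intro exI[of _ 1]) auto
next
  case (insert a F)
  then obtain \<epsilon> where e: "\<epsilon> > 0" "\<forall>x\<in>F. Q x \<epsilon>" by auto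
  obtain \<epsilon>a where ea: "\<epsilon>a > 0" "Q a \<epsilon>a" using insert.prems by auto
  show ?case
  proof (intro exI[of _ "min \<epsilon> \<epsilon>a"] conjI ballI)
    show "0 < min \<epsilon> \<epsilon>a" using e ea by simp
    fix x assume "x \<in> insert a F"
    then show "Q x (min \<epsilon> \<epsilon>a)"
    proof
      assume "x = a" then show ?thesis using mono[rule_format, OF ea(2), of "min \<epsilon> \<epsilon>a"] ea e by simp
    next
      assume x: "x \<in> F" then show ?thesis using mono[rule_format, OF e(2)[rule_format, OF x], of "min \<epsilon> \<epsilon>a"] ea e by simp
    qed
  qed
qed

lemma drivenD:
  assumes "driven D P1 Pq \<sigma>"
  shows "\<forall>t\<ge>0. \<forall>x\<in>D. \<exists>\<epsilon>>0. \<forall>s. t \<le> s \<and> s < t + \<epsilon> \<longrightarrow> \<sigma> s x = \<sigma> t x"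
    "\<forall>t>0. \<forall>x\<in>D. \<exists>v. \<exists>\<epsilon>>0. \<forall>s. t - \<epsilon> < s \<and> s < t \<longrightarrow> \<sigma> s x = v"
    "\<forall>t>0. \<forall>x\<in>D. \<sigma> t x = update D P1 Pq (left_limit \<sigma> t) t x"
  using assms[unfolded driven_def]
  by (rule conjunct1, rule conjunct1[OF conjunct2], rule conjunct2[OF conjunct2])

lemma driven_rc:
  assumes dr: "driven D P1 Pq \<sigma>" and F: "finite F" "F \<subseteq> D" and t: "0 \<le> t"
  shows "\<exists>\<epsilon>>0. \<forall>s. t \<le> s \<and> s < t + \<epsilon> \<longrightarrow> restr F (\<sigma> s) = restr F (\<sigma> t)"
proof -
  have "\<exists>\<epsilon>>0. \<forall>x\<in>F. (\<forall>s. t \<le> s \<and> s < t + \<epsilon> \<longrightarrow> \<sigma> s x = \<sigma> t x)"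
  proof (rule finite_eps[OF F(1)])
    show "\<forall>x\<in>F. \<exists>\<epsilon>>0. \<forall>s. t \<le> s \<and> s < t + \<epsilon> \<longrightarrow> \<sigma> s x = \<sigma> t x"
      using drivenD(1)[OF dr] F t by (meson subsetD)
    show "\<forall>x \<epsilon> \<epsilon>'. (\<forall>s. t \<le> s \<and> s < t + \<epsilon> \<longrightarrow> \<sigma> s x = \<sigma> t x) \<longrightarrow> 0 < \<epsilon>' \<longrightarrow> \<epsilon>' \<le> \<epsilon> \<longrightarrow>
        (\<forall>s. t \<le> s \<and> s < t + \<epsilon>' \<longrightarrow> \<sigma> s x = \<sigma> t x)"
    proof (intro allI impI)
      fix x \<epsilon> \<epsilon>' s assume H: "\<forall>s. t \<le> s \<and> s < t + \<epsilon> \<longrightarrow> \<sigma> s x = \<sigma> t x" "0 < \<epsilon>'" "\<epsilon>' \<le> \<epsilon>"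
        and s: "t \<le> s \<and> s < t + \<epsilon>'"
      then have "t \<le> s \<and> s < t + \<epsilon>" by linarith
      then show "\<sigma> s x = \<sigma> t x" using H(1) by blast
    qed
  qed
  then obtain \<epsilon> where e: "\<epsilon> > 0" "\<forall>x\<in>F. (\<forall>s. t \<le> s \<and> s < t + \<epsilon> \<longrightarrow> \<sigma> s x = \<sigma> t x)" by blast
  show ?thesis
  proof (intro exI[of _ \<epsilon>] conjI allI impI ext)
    fix s z assume s: "t \<le> s \<and> s < t + \<epsilon>"
    show "restr F (\<sigma> s) z = restr F (\<sigma> t) z"
    proof (cases "z \<in> F")
      case True
      have "\<sigma> s z = \<sigma> t z" using e(2) True s by blast
      then show ?thesis using True unfolding restr_def by simp
    next
      case False then show ?thesis unfolding restr_def by simp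
    qed
  qed (rule e(1))
qed

lemma left_limit_eq:
  assumes "\<epsilon> > 0" "\<forall>s. t - \<epsilon> < s \<and> s < t \<longrightarrow> \<sigma> s x = v"
  shows "left_limit \<sigma> t x = v"
  unfolding left_limit_def
proof (rule the_equality)
  show "\<exists>\<epsilon>>0. \<forall>s. t - \<epsilon> < s \<and> s < t \<longrightarrow> \<sigma> s x = v" using assms by blast
next
  fix v' assume "\<exists>\<epsilon>>0. \<forall>s. t - \<epsilon> < s \<and> s < t \<longrightarrow> \<sigma> s x = v'"
  then obtain \<epsilon>' where e': "\<epsilon>' > 0" "\<forall>s. t - \<epsilon>' < s \<and> s < t \<longrightarrow> \<sigma> s x = v'" by blast
  define s where "s = t - min \<epsilon> \<epsilon>' / 2"
  have "t - \<epsilon> < s" "s < t" "t - \<epsilon>' < s" using assms(1) e'(1) by (auto simp: s_def min_def)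
  then show "v' = v" using assms(2) e'(2) by metis
qed

lemma driven_ll:
  assumes dr: "driven D P1 Pq \<sigma>" and F: "finite F" "F \<subseteq> D" and t: "0 < t"
  shows "\<exists>\<epsilon>>0. \<forall>s. t - \<epsilon> < s \<and> s < t \<longrightarrow> restr F (\<sigma> s) = restr F (left_limit \<sigma> t)"
proof -
  have "\<exists>\<epsilon>>0. \<forall>x\<in>F. (\<forall>s. t - \<epsilon> < s \<and> s < t \<longrightarrow> \<sigma> s x = left_limit \<sigma> t x)"
  proof (rule finite_eps[OF F(1)])
    show "\<forall>x\<in>F. \<exists>\<epsilon>>0. \<forall>s. t - \<epsilon> < s \<and> s < t \<longrightarrow> \<sigma> s x = left_limit \<sigma> t x"
    proof
      fix x assume x: "x \<in> F"
      then obtain v \<epsilon> where e: "\<epsilon> > 0" "\<forall>s. t - \<epsilon> < s \<and> s < t \<longrightarrow> \<sigma> s x = v"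
        using drivenD(2)[OF dr] F t x by (meson subsetD)
      then have "left_limit \<sigma> t x = v" by (rule left_limit_eq)
      then show "\<exists>\<epsilon>>0. \<forall>s. t - \<epsilon> < s \<and> s < t \<longrightarrow> \<sigma> s x = left_limit \<sigma> t x" using e by metis
    qed
    show "\<forall>x \<epsilon> \<epsilon>'. (\<forall>s. t - \<epsilon> < s \<and> s < t \<longrightarrow> \<sigma> s x = left_limit \<sigma> t x) \<longrightarrow> 0 < \<epsilon>' \<longrightarrow> \<epsilon>' \<le> \<epsilon> \<longrightarrow>
        (\<forall>s. t - \<epsilon>' < s \<and> s < t \<longrightarrow> \<sigma> s x = left_limit \<sigma> t x)"
    proof (intro allI impI)
      fix x \<epsilon> \<epsilon>' s assume H: "\<forall>s. t - \<epsilon> < s \<and> s < t \<longrightarrow> \<sigma> s x = left_limit \<sigma> t x" "0 < \<epsilon>'" "\<epsilon>' \<le> \<epsilon>"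
        and s: "t - \<epsilon>' < s \<and> s < t"
      then have "t - \<epsilon> < s \<and> s < t" by linarith
      then show "\<sigma> s x = left_limit \<sigma> t x" using H(1) by blast
    qed
  qed
  then obtain \<epsilon> where e: "\<epsilon> > 0" "\<forall>x\<in>F. (\<forall>s. t - \<epsilon> < s \<and> s < t \<longrightarrow> \<sigma> s x = left_limit \<sigma> t x)" by blast
  show ?thesis
  proof (intro exI[of _ \<epsilon>] conjI allI impI ext)
    fix s z assume s: "t - \<epsilon> < s \<and> s < t"
    show "restr F (\<sigma> s) z = restr F (left_limit \<sigma> t) z"
    proof (cases "z \<in> F")
      case True
      have "\<sigma> s z = left_limit \<sigma> t z" using e(2) True s by blast
      then show ?thesis using True unfolding restr_def by simp
    next
      case False then show ?thesis unfolding restr_def by simp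
    qed
  qed (rule e(1))
qed

lemma cont_induct:
  fixes g :: "real \<Rightarrow> 'a"
  assumes RC: "\<forall>t. 0 \<le> t \<and> t < T \<longrightarrow> (\<exists>\<epsilon>>0. \<forall>s. t \<le> s \<and> s < t + \<epsilon> \<longrightarrow> g s = g t)"
    and P0: "P (g 0)"
    and step: "\<forall>t. 0 < t \<and> t \<le> T \<longrightarrow> (\<forall>s. 0 \<le> s \<and> s < t \<longrightarrow> P (g s)) \<longrightarrow> P (g t)"
  shows "\<forall>t. 0 \<le> t \<and> t \<le> T \<longrightarrow> P (g t)"
proof (rule ccontr)
  define S where "S = {t. 0 \<le> t \<and> t \<le> T \<and> \<not> P (g t)}"
  assume "\<not> (\<forall>t. 0 \<le> t \<and> t \<le> T \<longrightarrow> P (g t))"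
  then have ne: "S \<noteq> {}" by (auto simp: S_def)
  have bdd: "bdd_below S" unfolding bdd_below_def S_def by (intro exI[of _ 0]) blast
  define s where "s = Inf S"
  have lower: "s \<le> t" if "t \<in> S" for t using cInf_lower[OF that bdd] by (simp add: s_def)
  have s0: "0 \<le> s" unfolding s_def by (rule cInf_greatest[OF ne]) (simp add: S_def)
  obtain t0 where t0: "t0 \<in> S" using ne by blast
  have sT: "s \<le> T" using lower[OF t0] t0 unfolding S_def by simp
  have before: "P (g u)" if "0 \<le> u" "u < s" for u
  proof (rule ccontr)
    assume "\<not> P (g u)"
    then have "u \<in> S" using that sT unfolding S_def by simp
    then have "s \<le> u" by (rule lower)
    then show False using that by simp
  qed
  have Ps: "P (g s)"
  proof (cases "s = 0")
    case True then show ?thesis using P0 by simp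
  next
    case False
    then have "0 < s \<and> s \<le> T" using s0 sT by simp
    moreover have "\<forall>u. 0 \<le> u \<and> u < s \<longrightarrow> P (g u)" using before by blast
    ultimately show ?thesis using step by blast
  qed
  show False
  proof (cases "s < T")
    case False
    then have "s = T" using sT by simp
    then have "t0 = s" using lower[OF t0] t0 unfolding S_def by simp
    then show False using t0 Ps unfolding S_def by simp
  next
    case True
    have "\<exists>\<epsilon>>0. \<forall>u. s \<le> u \<and> u < s + \<epsilon> \<longrightarrow> g u = g s"
      by (rule RC[rule_format]) (use s0 True in simp)
    then obtain \<epsilon> where e: "\<epsilon> > 0" "\<forall>u. s \<le> u \<and> u < s + \<epsilon> \<longrightarrow> g u = g s" by blast
    have "s + \<epsilon> \<le> Inf S"
    proof (rule cInf_greatest[OF ne])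
      fix t assume t: "t \<in> S"
      show "s + \<epsilon> \<le> t"
      proof (rule ccontr)
        assume "\<not> s + \<epsilon> \<le> t"
        then have "s \<le> t \<and> t < s + \<epsilon>" using lower[OF t] by simp
        then have "g t = g s" using e(2) by blast
        then show False using t Ps unfolding S_def by simp
      qed
    qed
    then show False using e(1) by (simp add: s_def)
  qed
qed

lemma localize:
  assumes sub: "{c<..d} \<subseteq> D" and nc: "c \<notin> active D P1 Pq \<tau> t" and nd: "d \<notin> active D P1 Pq \<tau> t"
  shows "restr {c<..d} (update D P1 Pq \<tau> t) = update {c<..d} P1 Pq (restr {c<..d} \<tau>) t"
proof
  fix z
  let ?F = "{c<..d}"
  have act: "x \<in> active D P1 Pq \<tau> t \<longleftrightarrow> x \<in> active ?F P1 Pq (restr ?F \<tau>) t" if "x \<in> ?F \<or> x = c" for x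
  proof (cases "x = c \<or> x = d")
    case True
    then show ?thesis using nc nd by (auto simp: active_def)
  next
    case False
    then have "x \<in> ?F" "x + 1 \<in> ?F" using that by auto
    then show ?thesis using sub by (auto simp: active_def restr_def)
  qed
  show "restr ?F (update D P1 Pq \<tau> t) z = update ?F P1 Pq (restr ?F \<tau>) t z"
  proof (cases "z \<in> ?F")
    case False
    then show ?thesis by (auto simp: restr_def update_def active_def)
  next
    case True
    have a1: "z \<in> active D P1 Pq \<tau> t \<longleftrightarrow> z \<in> active ?F P1 Pq (restr ?F \<tau>) t"
      using act True by blast
    have a2: "z - 1 \<in> active D P1 Pq \<tau> t \<longleftrightarrow> z - 1 \<in> active ?F P1 Pq (restr ?F \<tau>) t"
      using act[of "z-1"] True by force
    have i1: "z \<in> active ?F P1 Pq (restr ?F \<tau>) t \<Longrightarrow> z + 1 \<in> ?F" by (auto simp: active_def)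
    have i2: "z - 1 \<in> active ?F P1 Pq (restr ?F \<tau>) t \<Longrightarrow> z - 1 \<in> ?F" by (auto simp: active_def)
    show ?thesis using True a1 a2 i1 i2 unfolding update_def restr_def by auto
  qed
qed

lemma update_one:
  assumes "\<forall>x. x \<in> active F P1 Pq \<tau> t \<longrightarrow> x = e"
  shows "update F P1 Pq \<tau> t = (if e \<in> active F P1 Pq \<tau> t then swp e \<tau> else \<tau>)"
proof
  fix z
  let ?A = "active F P1 Pq \<tau> t"
  have z1: "z \<in> ?A \<Longrightarrow> z = e" using assms by blast
  have z2: "z - 1 \<in> ?A \<Longrightarrow> z = e + 1" using assms by force
  show "update F P1 Pq \<tau> t z = (if e \<in> ?A then swp e \<tau> else \<tau>) z"
  proof (cases "e \<in> ?A")
    case True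
    show ?thesis
    proof (cases "z = e")
      case True then show ?thesis using \<open>e \<in> ?A\<close> by (simp add: update_def swp_def)
    next
      case ne: False
      show ?thesis
      proof (cases "z = e + 1")
        case True
        then have "z \<notin> ?A" using z1 by auto
        moreover have "z - 1 \<in> ?A" using True \<open>e \<in> ?A\<close> by simp
        ultimately show ?thesis using True \<open>e \<in> ?A\<close> by (simp add: update_def swp_def)
      next
        case False
        then have "z \<notin> ?A" "z - 1 \<notin> ?A" using z1 z2 ne by auto
        then show ?thesis using False ne \<open>e \<in> ?A\<close> by (simp add: update_def swp_def)
      qed
    qed
  next
    case False
    then have "z \<notin> ?A" "z - 1 \<notin> ?A" using z1 z2 by auto
    then show ?thesis using False by (simp add: update_def)
  qed
qed

lemma active_ring: "x \<in> active F P1 Pq \<tau> t \<Longrightarrow> (x,t) \<in> P1 \<or> (x,t) \<in> Pq"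
  by (auto simp: active_def)

lemma update_P1:
  assumes e: "(e,t) \<in> P1" and u: "\<forall>x. (x,t) \<in> P1 \<longrightarrow> x = e" and n: "\<forall>x. (x,t) \<notin> Pq"
  shows "update F P1 Pq \<tau> t = stepF F e True \<tau>"
proof -
  have "\<forall>x. x \<in> active F P1 Pq \<tau> t \<longrightarrow> x = e"
  proof (intro allI impI)
    fix x assume "x \<in> active F P1 Pq \<tau> t"
    then have "(x,t) \<in> P1 \<or> (x,t) \<in> Pq" by (rule active_ring)
    then show "x = e" using u n by blast
  qed
  moreover have "e \<in> active F P1 Pq \<tau> t \<longleftrightarrow> e \<in> F \<and> e + 1 \<in> F \<and> \<tau> e < \<tau> (e+1)"
    unfolding active_def using e n by simp
  ultimately show ?thesis by (simp add: update_one stepF_def)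
qed

lemma update_Pq:
  assumes e: "(e,t) \<in> Pq" and u: "\<forall>x. (x,t) \<in> Pq \<longrightarrow> x = e" and n: "\<forall>x. (x,t) \<notin> P1"
  shows "update F P1 Pq \<tau> t = stepF F e False \<tau>"
proof -
  have "\<forall>x. x \<in> active F P1 Pq \<tau> t \<longrightarrow> x = e"
  proof (intro allI impI)
    fix x assume "x \<in> active F P1 Pq \<tau> t"
    then have "(x,t) \<in> P1 \<or> (x,t) \<in> Pq" by (rule active_ring)
    then show "x = e" using u n by blast
  qed
  moreover have "e \<in> active F P1 Pq \<tau> t \<longleftrightarrow> e \<in> F \<and> e + 1 \<in> F \<and> \<tau> (e+1) < \<tau> e"
    unfolding active_def using e n by auto
  ultimately show ?thesis by (simp add: update_one stepF_def)
qed

lemma update_none: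
  assumes "\<forall>x. (x,t) \<notin> P1 \<and> (x,t) \<notin> Pq"
  shows "update F P1 Pq \<tau> t = \<tau>"
proof -
  have "active F P1 Pq \<tau> t = {}" using assms active_ring by blast
  then show ?thesis by (simp add: update_def fun_eq_iff)
qed

lemma traj_pair:
  assumes d1: "driven D1 P1 Pq \<sigma>1" and d2: "driven D2 P1 Pq \<sigma>2"
    and sub1: "{c1<..d1} \<subseteq> D1" and sub2: "{c2<..d2} \<subseteq> D2"
    and bnd1: "\<forall>t \<tau>. 0 < t \<and> t \<le> T \<longrightarrow> c1 \<notin> active D1 P1 Pq \<tau> t \<and> d1 \<notin> active D1 P1 Pq \<tau> t"
    and bnd2: "\<forall>t \<tau>. 0 < t \<and> t \<le> T \<longrightarrow> c2 \<notin> active D2 P1 Pq \<tau> t \<and> d2 \<notin> active D2 P1 Pq \<tau> t"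
    and G1: "\<forall>x y t. ((x,t) \<in> P1 \<or> (x,t) \<in> Pq) \<and> ((y,t) \<in> P1 \<or> (y,t) \<in> Pq) \<longrightarrow> x = y"
    and G1': "\<forall>x t. \<not> ((x,t) \<in> P1 \<and> (x,t) \<in> Pq)"
    and P0: "P (restr {c1<..d1} (\<sigma>1 0)) (restr {c2<..d2} (\<sigma>2 0))"
    and stp: "\<forall>u v e up. P u v \<longrightarrow> P (stepF {c1<..d1} e up u) (stepF {c2<..d2} e up v)"
  shows "\<forall>t. 0 \<le> t \<and> t \<le> T \<longrightarrow> P (restr {c1<..d1} (\<sigma>1 t)) (restr {c2<..d2} (\<sigma>2 t))"
proof -
  let ?F1 = "{c1<..d1}" and ?F2 = "{c2<..d2}"
  define g where "g t = (restr ?F1 (\<sigma>1 t), restr ?F2 (\<sigma>2 t))" for t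
  have "\<forall>t. 0 \<le> t \<and> t \<le> T \<longrightarrow> case_prod P (g t)"
  proof (rule cont_induct[where g = g and P = "case_prod P"])
    show "\<forall>t. 0 \<le> t \<and> t < T \<longrightarrow> (\<exists>\<epsilon>>0. \<forall>s. t \<le> s \<and> s < t + \<epsilon> \<longrightarrow> g s = g t)"
    proof (intro allI impI)
      fix t :: real assume t: "0 \<le> t \<and> t < T"
      have "\<exists>\<epsilon>>0. \<forall>s. t \<le> s \<and> s < t + \<epsilon> \<longrightarrow> restr ?F1 (\<sigma>1 s) = restr ?F1 (\<sigma>1 t)"
        by (rule driven_rc[OF d1 _ sub1]) (use t in simp_all)
      then obtain e1 where e1: "e1 > 0" "\<forall>s. t \<le> s \<and> s < t + e1 \<longrightarrow> restr ?F1 (\<sigma>1 s) = restr ?F1 (\<sigma>1 t)"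
        by blast
      have "\<exists>\<epsilon>>0. \<forall>s. t \<le> s \<and> s < t + \<epsilon> \<longrightarrow> restr ?F2 (\<sigma>2 s) = restr ?F2 (\<sigma>2 t)"
        by (rule driven_rc[OF d2 _ sub2]) (use t in simp_all)
      then obtain e2 where e2: "e2 > 0" "\<forall>s. t \<le> s \<and> s < t + e2 \<longrightarrow> restr ?F2 (\<sigma>2 s) = restr ?F2 (\<sigma>2 t)"
        by blast
      show "\<exists>\<epsilon>>0. \<forall>s. t \<le> s \<and> s < t + \<epsilon> \<longrightarrow> g s = g t"
      proof (intro exI[of _ "min e1 e2"] conjI allI impI)
        show "0 < min e1 e2" using e1(1) e2(1) by simp
        fix s assume s: "t \<le> s \<and> s < t + min e1 e2"
        have "restr ?F1 (\<sigma>1 s) = restr ?F1 (\<sigma>1 t)" by (rule e1(2)[rule_format]) (use s in \<open>simp add: min_def split: if_splits\<close>)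
        moreover have "restr ?F2 (\<sigma>2 s) = restr ?F2 (\<sigma>2 t)" by (rule e2(2)[rule_format]) (use s in \<open>simp add: min_def split: if_splits\<close>)
        ultimately show "g s = g t" unfolding g_def by simp
      qed
    qed
    show "case_prod P (g 0)" using P0 by (simp add: g_def)
    show "\<forall>t. 0 < t \<and> t \<le> T \<longrightarrow> (\<forall>s. 0 \<le> s \<and> s < t \<longrightarrow> case_prod P (g s)) \<longrightarrow> case_prod P (g t)"
    proof (intro allI impI)
      fix t :: real assume t: "0 < t \<and> t \<le> T" and IH: "\<forall>s. 0 \<le> s \<and> s < t \<longrightarrow> case_prod P (g s)"
      let ?l1 = "left_limit \<sigma>1 t" and ?l2 = "left_limit \<sigma>2 t"
      have "\<exists>\<epsilon>>0. \<forall>s. t - \<epsilon> < s \<and> s < t \<longrightarrow> restr ?F1 (\<sigma>1 s) = restr ?F1 ?l1"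
        by (rule driven_ll[OF d1 _ sub1]) (use t in simp_all)
      then obtain e1 where e1: "e1 > 0" "\<forall>s. t - e1 < s \<and> s < t \<longrightarrow> restr ?F1 (\<sigma>1 s) = restr ?F1 ?l1"
        by blast
      have "\<exists>\<epsilon>>0. \<forall>s. t - \<epsilon> < s \<and> s < t \<longrightarrow> restr ?F2 (\<sigma>2 s) = restr ?F2 ?l2"
        by (rule driven_ll[OF d2 _ sub2]) (use t in simp_all)
      then obtain e2 where e2: "e2 > 0" "\<forall>s. t - e2 < s \<and> s < t \<longrightarrow> restr ?F2 (\<sigma>2 s) = restr ?F2 ?l2"
        by blast
      define s0 where "s0 = max (t/2) (t - min e1 e2 / 2)"
      have s0: "0 \<le> s0" "s0 < t" "t - e1 < s0" "t - e2 < s0" using t e1(1) e2(1) unfolding s0_def by (auto simp: min_def max_def)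
      have "case_prod P (g s0)" by (rule IH[rule_format]) (use s0 in simp)
      moreover have "restr ?F1 (\<sigma>1 s0) = restr ?F1 ?l1" by (rule e1(2)[rule_format]) (use s0 in simp)
      moreover have "restr ?F2 (\<sigma>2 s0) = restr ?F2 ?l2" by (rule e2(2)[rule_format]) (use s0 in simp)
      ultimately have Pl: "P (restr ?F1 ?l1) (restr ?F2 ?l2)" unfolding g_def by simp
      have u1: "restr ?F1 (\<sigma>1 t) = update ?F1 P1 Pq (restr ?F1 ?l1) t"
      proof -
        have "restr ?F1 (\<sigma>1 t) = restr ?F1 (update D1 P1 Pq ?l1 t)"
        proof
          fix z show "restr ?F1 (\<sigma>1 t) z = restr ?F1 (update D1 P1 Pq ?l1 t) z"
          proof (cases "z \<in> ?F1")
            case True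
            then have "z \<in> D1" using sub1 by blast
            then have "\<sigma>1 t z = update D1 P1 Pq ?l1 t z" using drivenD(3)[OF d1] t by simp
            then show ?thesis unfolding restr_def by simp
          next
            case False then show ?thesis by (simp only: restr_out[OF False])
          qed
        qed
        also have "\<dots> = update ?F1 P1 Pq (restr ?F1 ?l1) t"
          using bnd1 t by (intro localize[OF sub1]) auto
        finally show ?thesis .
      qed
      have u2: "restr ?F2 (\<sigma>2 t) = update ?F2 P1 Pq (restr ?F2 ?l2) t"
      proof -
        have "restr ?F2 (\<sigma>2 t) = restr ?F2 (update D2 P1 Pq ?l2 t)"
        proof
          fix z show "restr ?F2 (\<sigma>2 t) z = restr ?F2 (update D2 P1 Pq ?l2 t) z"
          proof (cases "z \<in> ?F2")
            case True
            then have "z \<in> D2" using sub2 by blast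
            then have "\<sigma>2 t z = update D2 P1 Pq ?l2 t z" using drivenD(3)[OF d2] t by simp
            then show ?thesis unfolding restr_def by simp
          next
            case False then show ?thesis by (simp only: restr_out[OF False])
          qed
        qed
        also have "\<dots> = update ?F2 P1 Pq (restr ?F2 ?l2) t"
          using bnd2 t by (intro localize[OF sub2]) auto
        finally show ?thesis .
      qed
      show "case_prod P (g t)"
      proof (cases "\<exists>e. (e,t) \<in> P1")
        case True
        then obtain e where e: "(e,t) \<in> P1" by blast
        have a: "\<forall>x. (x,t) \<in> P1 \<longrightarrow> x = e" "\<forall>x. (x,t) \<notin> Pq" using G1 G1' e by blast+
        show ?thesis using u1 u2 update_P1[OF e a] stp Pl by (simp add: g_def)
      next
        case F: False
        show ?thesis
        proof (cases "\<exists>e. (e,t) \<in> Pq")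
          case True
          then obtain e where e: "(e,t) \<in> Pq" by blast
          have a: "\<forall>x. (x,t) \<in> Pq \<longrightarrow> x = e" "\<forall>x. (x,t) \<notin> P1" using G1 F e by blast+
          show ?thesis using u1 u2 update_Pq[OF e a] stp Pl by (simp add: g_def)
        next
          case False
          then have "\<forall>x. (x,t) \<notin> P1 \<and> (x,t) \<notin> Pq" using F by blast
          then show ?thesis using u1 u2 update_none Pl by (simp add: g_def)
        qed
      qed
    qed
  qed
  then show ?thesis by (simp add: g_def)
qed




definition noring :: "(int \<times> real) set \<Rightarrow> (int \<times> real) set \<Rightarrow> int \<Rightarrow> real \<Rightarrow> bool" where
  "noring P1 Pq x T \<longleftrightarrow> (\<forall>s. 0 < s \<and> s \<le> T \<longrightarrow> (x,s) \<notin> P1 \<and> (x,s) \<notin> Pq)"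

lemma FN_eq: "{1..int N} = {0<..int N}" by auto

lemma hN_restr: "hN N k (restr {0<..int N} \<sigma>) = hN N k \<sigma>"
proof -
  have "ext_fin 1 (int N) (ind k (restr {0<..int N} \<sigma>)) = ext_fin 1 (int N) (ind k \<sigma>)"
    by (auto simp: ext_fin_def ind_def restr_def fun_eq_iff)
  then show ?thesis by (simp add: hN_ind)
qed

lemma E_le:
  fixes x k :: int
  shows "(if x \<le> 0 then x else if x \<le> int N then max (-x) (x - 2*k) else 2 * int N - 2*k - x) \<le> -x
    \<or> (if x \<le> 0 then x else if x \<le> int N then max (-x) (x - 2*k) else 2 * int N - 2*k - x) \<le> x - 2*k"
  by (auto simp: max_def)

lemma block_bij:
  assumes dz: "driven UNIV P1 Pq \<zeta>" and z0: "\<zeta> 0 = id"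
    and G1: "\<forall>x y t. ((x,t) \<in> P1 \<or> (x,t) \<in> Pq) \<and> ((y,t) \<in> P1 \<or> (y,t) \<in> Pq) \<longrightarrow> x = y"
    and G1': "\<forall>x t. \<not> ((x,t) \<in> P1 \<and> (x,t) \<in> Pq)"
    and nc: "noring P1 Pq c T" and nd: "noring P1 Pq d T"
    and t: "0 \<le> t" "t \<le> T" and z: "z \<in> {c<..d}"
  shows "\<zeta> t z \<in> {c<..d}"
proof -
  have bnd: "\<forall>t \<tau>. 0 < t \<and> t \<le> T \<longrightarrow> c \<notin> active UNIV P1 Pq \<tau> t \<and> d \<notin> active UNIV P1 Pq \<tau> t"
  proof (intro allI impI conjI)
    fix t :: real and \<tau> assume t: "0 < t \<and> t \<le> T"
    have "(c,t) \<notin> P1" "(c,t) \<notin> Pq" "(d,t) \<notin> P1" "(d,t) \<notin> Pq"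
      using nc nd t unfolding noring_def by auto
    then show "c \<notin> active UNIV P1 Pq \<tau> t" "d \<notin> active UNIV P1 Pq \<tau> t"
      unfolding active_def by auto
  qed
  have "\<forall>t. 0 \<le> t \<and> t \<le> T \<longrightarrow> (\<lambda>u v. bij_betw u {c<..d} {c<..d}) (restr {c<..d} (\<zeta> t)) (restr {c<..d} (\<zeta> t))"
  proof (rule traj_pair[where P = "\<lambda>u v. bij_betw u {c<..d} {c<..d}", OF dz dz _ _ bnd bnd G1 G1'])
    show "bij_betw (restr {c<..d} (\<zeta> 0)) {c<..d} {c<..d}"
    proof -
      have "bij_betw id {c<..d} {c<..d}" by simp
      moreover have "\<forall>z\<in>{c<..d}. restr {c<..d} (\<zeta> 0) z = id z" using z0 by (simp add: restr_def)
      ultimately show ?thesis by (subst bij_betw_cong[of _ _ id]) simp_all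
    qed
    show "\<forall>u v e up. bij_betw u {c<..d} {c<..d} \<longrightarrow> bij_betw (stepF {c<..d} e up u) {c<..d} {c<..d}"
      by (intro allI impI bij_stepF)
  qed simp_all
  then have "bij_betw (restr {c<..d} (\<zeta> t)) {c<..d} {c<..d}" using t by blast
  then have "restr {c<..d} (\<zeta> t) z \<in> {c<..d}" using z bij_betwE by blast
  then show ?thesis using z by (simp add: restr_def)
qed


lemma restr_id_bij:
  assumes "\<forall>z\<in>F. f z = z"
  shows "bij_betw (restr F f) F F"
proof -
  have "bij_betw id F F" by simp
  moreover have "\<forall>z\<in>F. restr F f z = id z" using assms by (simp add: restr_def)
  ultimately show ?thesis by (subst bij_betw_cong[of _ _ id]) simp_all
qed

lemma restr_perm_bij:
  assumes "v0 \<in> perms N" "\<forall>x\<in>{1..int N}. f x = v0 x"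
  shows "bij_betw (restr {0<..int N} f) {0<..int N} {0<..int N}"
proof -
  have "bij_betw v0 {0<..int N} {0<..int N}" using assms(1) by (simp add: perms_def FN_eq)
  moreover have "\<forall>z\<in>{0<..int N}. restr {0<..int N} f z = v0 z" using assms(2) by (simp add: restr_def FN_eq)
  ultimately show ?thesis by (subst bij_betw_cong[of _ _ v0]) simp_all
qed

lemma bndN: "\<forall>t \<tau>. 0 < t \<and> t \<le> T \<longrightarrow> 0 \<notin> active {0<..int N} P1 Pq \<tau> t \<and> int N \<notin> active {0<..int N} P1 Pq \<tau> t"
  by (auto simp: active_def)

lemma pairN:
  assumes G1: "\<forall>x y t. ((x,t) \<in> P1 \<or> (x,t) \<in> Pq) \<and> ((y,t) \<in> P1 \<or> (y,t) \<in> Pq) \<longrightarrow> x = y"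
    and G1': "\<forall>x t. \<not> ((x,t) \<in> P1 \<and> (x,t) \<in> Pq)"
    and dxi: "driven {1..int N} P1 Pq \<xi>" "\<forall>x\<in>{1..int N}. \<xi> 0 x = x"
    and dv: "driven {1..int N} P1 Pq \<sigma>" "\<forall>x\<in>{1..int N}. \<sigma> 0 x = v0 x"
    and v0: "v0 \<in> perms N"
    and k: "k \<in> {0..int N}" and t: "0 \<le> t"
  shows "hN N k (\<xi> t) x \<le> hN N k (\<sigma> t) x"
proof -
  let ?F = "{0<..int N}"
  have d1: "driven ?F P1 Pq \<xi>" using dxi(1) by (simp add: FN_eq)
  have d2: "driven ?F P1 Pq \<sigma>" using dv(1) by (simp add: FN_eq)
  let ?P = "\<lambda>u v. bij_betw u ?F ?F \<and> bij_betw v ?F ?F \<and> (\<forall>k\<in>{0..int N}. \<forall>x. hN N k u x \<le> hN N k v x)"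
  have "\<forall>s. 0 \<le> s \<and> s \<le> t \<longrightarrow> ?P (restr ?F (\<xi> s)) (restr ?F (\<sigma> s))"
  proof (rule traj_pair[where P = ?P, OF d1 d2 _ _ bndN bndN G1 G1'])
    have u0: "\<forall>z\<in>?F. restr ?F (\<xi> 0) z = z" using dxi(2) by (simp add: restr_def FN_eq)
    have bu: "bij_betw (restr ?F (\<xi> 0)) ?F ?F"
      using dxi(2) by (intro restr_id_bij) (simp add: FN_eq)
    have bv: "bij_betw (restr ?F (\<sigma> 0)) ?F ?F" by (rule restr_perm_bij[OF v0 dv(2)])
    have cmp: "hN N k (restr ?F (\<xi> 0)) x \<le> hN N k (restr ?F (\<sigma> 0)) x" if "k \<in> {0..int N}" for k x
    proof -
      have "hN N k (restr ?F (\<xi> 0)) x \<le> (if x \<le> 0 then x else if x \<le> int N then max (-x) (x - 2*k) else 2 * int N - 2*k - x)"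
        using that by (intro hN_idv[OF u0]) auto
      also have "\<dots> \<le> hN N k (restr ?F (\<sigma> 0)) x"
        using that by (intro hN_bounds(1)[OF bv]) auto
      finally show ?thesis .
    qed
    show "?P (restr ?F (\<xi> 0)) (restr ?F (\<sigma> 0))" using bu bv cmp by blast
    show "\<forall>u v e up. ?P u v \<longrightarrow> ?P (stepF ?F e up u) (stepF ?F e up v)"
    proof (intro allI impI conjI)
      fix u v e up assume H: "?P u v"
      show "bij_betw (stepF ?F e up u) ?F ?F" using H by (intro bij_stepF) blast
      show "bij_betw (stepF ?F e up v) ?F ?F" using H by (intro bij_stepF) blast
      show "\<forall>k\<in>{0..int N}. \<forall>x. hN N k (stepF ?F e up u) x \<le> hN N k (stepF ?F e up v) x"
        using H by (intro stepP) blast+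
    qed
  qed simp_all
  then have "?P (restr ?F (\<xi> t)) (restr ?F (\<sigma> t))" using t by blast
  then have "hN N k (restr ?F (\<xi> t)) x \<le> hN N k (restr ?F (\<sigma> t)) x" using k by blast
  then show ?thesis by (simp add: hN_restr)
qed

lemma pairZ:
  assumes G1: "\<forall>x y t. ((x,t) \<in> P1 \<or> (x,t) \<in> Pq) \<and> ((y,t) \<in> P1 \<or> (y,t) \<in> Pq) \<longrightarrow> x = y"
    and G1': "\<forall>x t. \<not> ((x,t) \<in> P1 \<and> (x,t) \<in> Pq)"
    and G2: "\<forall>T::nat. \<forall>m::int. (\<exists>x\<le>m. noring P1 Pq x (real T)) \<and> (\<exists>x\<ge>m. noring P1 Pq x (real T))"
    and dxi: "driven {1..int N} P1 Pq \<xi>" "\<forall>x\<in>{1..int N}. \<xi> 0 x = x"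
    and dz: "driven UNIV P1 Pq \<zeta>" "\<zeta> 0 = id"
    and k: "k \<in> {0..int N}" and t: "0 \<le> t"
  shows "hN N k (\<xi> t) x \<le> hZ k (\<zeta> t) x"
proof -
  let ?F = "{0<..int N}"
  define T where "T = real (nat \<lceil>t\<rceil>)"
  have tT: "t \<le> T" unfolding T_def by linarith
  have G2T: "\<forall>m::int. (\<exists>x\<le>m. noring P1 Pq x T) \<and> (\<exists>x\<ge>m. noring P1 Pq x T)"
    using G2 unfolding T_def by blast
  obtain a where a: "a \<le> 0" "noring P1 Pq a T" using G2T by blast
  obtain b where b: "b \<ge> int N" "noring P1 Pq b T" using G2T by blast
  let ?G = "{a<..b}"
  have d1: "driven ?F P1 Pq \<xi>" using dxi(1) by (simp add: FN_eq)
  have bnd2: "\<forall>t \<tau>. 0 < t \<and> t \<le> T \<longrightarrow> a \<notin> active UNIV P1 Pq \<tau> t \<and> b \<notin> active UNIV P1 Pq \<tau> t"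
  proof (intro allI impI conjI)
    fix t :: real and \<tau> assume t: "0 < t \<and> t \<le> T"
    have "(a,t) \<notin> P1" "(a,t) \<notin> Pq" "(b,t) \<notin> P1" "(b,t) \<notin> Pq"
      using a(2) b(2) t unfolding noring_def by auto
    then show "a \<notin> active UNIV P1 Pq \<tau> t" "b \<notin> active UNIV P1 Pq \<tau> t"
      unfolding active_def by auto
  qed
  let ?P = "\<lambda>u v. bij_betw u ?F ?F \<and> bij_betw v ?G ?G \<and> (\<forall>z. z \<notin> ?G \<longrightarrow> v z = z) \<and>
      (\<forall>k\<in>{0..int N}. \<forall>x. hN N k u x \<le> hZ k v x)"
  have "\<forall>s. 0 \<le> s \<and> s \<le> T \<longrightarrow> ?P (restr ?F (\<xi> s)) (restr ?G (\<zeta> s))"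
  proof (rule traj_pair[where P = ?P, OF d1 dz(1) _ _ bndN bnd2 G1 G1'])
    have u0: "\<forall>z\<in>?F. restr ?F (\<xi> 0) z = z" using dxi(2) by (simp add: restr_def FN_eq)
    have bu: "bij_betw (restr ?F (\<xi> 0)) ?F ?F"
      using dxi(2) by (intro restr_id_bij) (simp add: FN_eq)
    have v0: "restr ?G (\<zeta> 0) = id" using dz(2) by (simp add: restr_def fun_eq_iff)
    have bv: "bij_betw (restr ?G (\<zeta> 0)) ?G ?G" unfolding v0 by simp
    have cmp: "hN N k (restr ?F (\<xi> 0)) x \<le> hZ k (restr ?G (\<zeta> 0)) x" if "k \<in> {0..int N}" for k x
    proof -
      have h1: "hN N k (restr ?F (\<xi> 0)) x \<le> (if x \<le> 0 then x else if x \<le> int N then max (-x) (x - 2*k) else 2 * int N - 2*k - x)"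
        using that by (intro hN_idv[OF u0]) auto
      have h2: "hZ k (restr ?G (\<zeta> 0)) x \<ge> -x" "hZ k (restr ?G (\<zeta> 0)) x \<ge> x - 2*k"
        using hZ_bounds[OF bv, of k x] that a b unfolding v0 by auto
      show ?thesis using h1 h2 E_le[of x N k] by linarith
    qed
    show "?P (restr ?F (\<xi> 0)) (restr ?G (\<zeta> 0))" using bu bv cmp v0 by simp
    show "\<forall>u v e up. ?P u v \<longrightarrow> ?P (stepF ?F e up u) (stepF ?G e up v)"
    proof (intro allI impI conjI)
      fix u v e up assume H: "?P u v"
      show "bij_betw (stepF ?F e up u) ?F ?F" using H by (intro bij_stepF) blast
      show "bij_betw (stepF ?G e up v) ?G ?G" using H by (intro bij_stepF) blast
      show "stepF ?G e up v z = z" if "z \<notin> ?G" for z using H that by (simp add: stepF_outside)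
      show "\<forall>k\<in>{0..int N}. \<forall>x. hN N k (stepF ?F e up u) x \<le> hZ k (stepF ?G e up v) x"
        using H a b by (intro stepQ) blast+
    qed
  qed simp_all
  then have P: "?P (restr ?F (\<xi> t)) (restr ?G (\<zeta> t))" using t tT by blast
  then have le: "hN N k (restr ?F (\<xi> t)) x \<le> hZ k (restr ?G (\<zeta> t)) x" using k by blast
  have ind_eq: "ind k (\<zeta> t) = ind k (restr ?G (\<zeta> t))"
  proof
    fix z
    show "ind k (\<zeta> t) z = ind k (restr ?G (\<zeta> t)) z"
    proof (cases "z \<in> ?G")
      case True then show ?thesis by (simp add: ind_def restr_def)
    next
      case False
      then consider "z \<le> a" | "z > b" by force
      then show ?thesis
      proof cases
        case 1
        obtain a' where a': "a' \<le> z - 1" "noring P1 Pq a' T" using G2T by blast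
        have "\<zeta> t z \<in> {a'<..a}"
          by (rule block_bij[OF dz G1 G1' a'(2) a(2)]) (use t tT a' 1 in auto)
        then have "\<zeta> t z \<le> k" using a k by auto
        moreover have "restr ?G (\<zeta> t) z = z" by (rule restr_out[OF False])
        moreover have "z \<le> k" using 1 a k by auto
        ultimately show ?thesis by (simp add: ind_def)
      next
        case 2
        obtain b' where b': "b' \<ge> z" "noring P1 Pq b' T" using G2T by blast
        have "\<zeta> t z \<in> {b<..b'}"
          by (rule block_bij[OF dz G1 G1' b(2) b'(2)]) (use t tT b' 2 in auto)
        then have "\<not> \<zeta> t z \<le> k" using b k by auto
        moreover have "restr ?G (\<zeta> t) z = z" by (rule restr_out[OF False])
        moreover have "\<not> z \<le> k" using 2 b k by auto
        ultimately show ?thesis by (simp add: ind_def)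
      qed
    qed
  qed
  have "hZ k (\<zeta> t) x = hZ k (restr ?G (\<zeta> t)) x" by (simp add: hZ_ind ind_eq)
  then show ?thesis using le by (simp add: hN_restr)
qed

theorem det:
  assumes G1: "\<forall>x y t. ((x,t) \<in> P1 \<or> (x,t) \<in> Pq) \<and> ((y,t) \<in> P1 \<or> (y,t) \<in> Pq) \<longrightarrow> x = y"
    and G1': "\<forall>x t. \<not> ((x,t) \<in> P1 \<and> (x,t) \<in> Pq)"
    and G2: "\<forall>T::nat. \<forall>m::int. (\<exists>x\<le>m. noring P1 Pq x (real T)) \<and> (\<exists>x\<ge>m. noring P1 Pq x (real T))"
    and w: "w \<in> perms N" and l0: "lam0 \<in> perms N"
  shows "driven UNIV P1 Pq \<zeta> \<and> \<zeta> 0 = id \<and>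
       driven {1..int N} P1 Pq \<xi> \<and> (\<forall>x\<in>{1..int N}. \<xi> 0 x = x) \<and>
       driven {1..int N} P1 Pq lam \<and> (\<forall>x\<in>{1..int N}. lam 0 x = lam0 x) \<and>
       driven {1..int N} P1 Pq \<xi>b \<and> (\<forall>x\<in>{1..int N}. \<xi>b 0 x = w x)
       \<longrightarrow> (\<forall>k\<in>{0..int N}. \<forall>t\<ge>0. \<forall>x.
             hN N k (\<xi> t) x \<le> hN N k (lam t) x \<and>
             hN N k (\<xi> t) x \<le> hZ k (\<zeta> t) x \<and>
             hN N k (\<xi> t) x \<le> hN N k (\<xi>b t) x)"
proof (intro impI ballI allI conjI)
  fix k :: int and t :: real and x :: int
  assume H: "driven UNIV P1 Pq \<zeta> \<and> \<zeta> 0 = id \<and>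
       driven {1..int N} P1 Pq \<xi> \<and> (\<forall>x\<in>{1..int N}. \<xi> 0 x = x) \<and>
       driven {1..int N} P1 Pq lam \<and> (\<forall>x\<in>{1..int N}. lam 0 x = lam0 x) \<and>
       driven {1..int N} P1 Pq \<xi>b \<and> (\<forall>x\<in>{1..int N}. \<xi>b 0 x = w x)"
    and k: "k \<in> {0..int N}" and t: "0 \<le> t"
  show "hN N k (\<xi> t) x \<le> hN N k (lam t) x"
    by (rule pairN[OF G1 G1' _ _ _ _ l0 k t]) (use H in blast)+
  show "hN N k (\<xi> t) x \<le> hZ k (\<zeta> t) x"
    by (rule pairZ[OF G1 G1' G2 _ _ _ _ k t]) (use H in blast)+
  show "hN N k (\<xi> t) x \<le> hN N k (\<xi>b t) x"
    by (rule pairN[OF G1 G1' _ _ _ _ w k t]) (use H in blast)+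
qed




lemma sets_exp1[measurable_cong]: "sets exp1 = sets borel"
  by (simp add: exp1_def)

lemma space_exp1[simp]: "space exp1 = UNIV"
  by (simp add: exp1_def)

lemma prob_space_exp1: "prob_space exp1"
  unfolding exp1_def using prob_space_exponential_density[of 1] by simp

lemma AE_exp1_neq: "AE x in exp1. x \<noteq> c"
  unfolding exp1_def
  by (subst AE_density) (auto intro: AE_mp[OF AE_lborel_singleton[of c]])

lemma AE_exp1_pos: "AE x in exp1. 0 < x"
proof -
  have "AE x in exp1. x \<noteq> 0" by (rule AE_exp1_neq)
  moreover have "AE x in exp1. 0 \<le> x"
    unfolding exp1_def by (subst AE_density) (auto simp: exponential_density_def)
  ultimately show ?thesis by eventually_elim auto
qed

lemma exp1_distributed: "distributed exp1 lborel (\<lambda>x. x) (exponential_density 1)"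
  unfolding distributed_def
  by (auto simp: exp1_def distr_id2)

lemma emeasure_exp1_le:
  assumes "0 \<le> c"
  shows "emeasure exp1 {..c} = ennreal (1 - exp (- c))"
proof -
  interpret prob_space exp1 by (rule prob_space_exp1)
  have "\<P>(x in exp1. x \<le> c) = 1 - exp (- c * 1)"
    by (rule exponential_distributedD_le[OF exp1_distributed assms]) simp
  moreover have "{x \<in> space exp1. x \<le> c} = {..c}" by auto
  ultimately show ?thesis by (simp add: emeasure_eq_measure)
qed


lemma prob_space_C: "prob_space clock_space"
  unfolding clock_space_def by (rule prob_space_PiM) (rule prob_space_exp1)

lemma sigma_finite_C: "sigma_finite_measure clock_space"
proof -
  interpret prob_space clock_space by (rule prob_space_C)
  show ?thesis by unfold_locales
qed

lemma KL:
  fixes j :: "int \<times> nat" and F :: "(int \<times> nat \<Rightarrow> real) \<Rightarrow> real"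
  assumes Fm: "F \<in> borel_measurable clock_space" and Fi: "\<forall>E v. F (E(j := v)) = F E"
  shows "AE E in clock_space. E j \<noteq> F E"
proof -
  define I where "I = UNIV - {j}"
  let ?M = "\<lambda>_::int \<times> nat. exp1"
  let ?PI = "PiM I ?M"
  have ins: "insert j I = UNIV" by (auto simp: I_def)
  have eq: "distr (exp1 \<Otimes>\<^sub>M ?PI) clock_space (\<lambda>(x, X). X(j := x)) = clock_space"
    using distr_pair_PiM_eq_PiM[of I ?M j] prob_space_exp1 unfolding clock_space_def ins by simp
  have fe: "(\<lambda>(x, X). X(j := x)) = (\<lambda>z. (snd z)(j := fst z))" by (auto simp: fun_eq_iff)
  have gm: "(\<lambda>(x, X). X(j := x)) \<in> (exp1 \<Otimes>\<^sub>M ?PI) \<rightarrow>\<^sub>M clock_space"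
    unfolding clock_space_def fe
  proof (rule measurable_fun_upd[where J = I])
    show "UNIV = I \<union> {j}" by (auto simp: I_def)
  qed measurable
  have Pm: "{E \<in> space clock_space. E j \<noteq> F E} \<in> sets clock_space"
  proof (rule borel_measurable_neq[OF _ Fm])
    show "(\<lambda>E. E j) \<in> borel_measurable clock_space" unfolding clock_space_def by measurable
  qed
  have hm: "(\<lambda>X. X(j := 0)) \<in> ?PI \<rightarrow>\<^sub>M clock_space"
    unfolding clock_space_def
  proof (rule measurable_fun_upd[where J = I])
    show "UNIV = I \<union> {j}" by (auto simp: I_def)
  qed measurable
  define G where "G X = F (X(j := 0))" for X
  have Gm: "G \<in> borel_measurable ?PI"
    unfolding G_def using measurable_comp[OF hm Fm] by (simp add: comp_def)
  interpret P1: prob_space "?PI" by (rule prob_space_PiM) (rule prob_space_exp1)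
  interpret E1: prob_space exp1 by (rule prob_space_exp1)
  interpret pair_sigma_finite exp1 ?PI by unfold_locales
  have setm: "{z \<in> space (exp1 \<Otimes>\<^sub>M ?PI). fst z \<noteq> G (snd z)} \<in> sets (exp1 \<Otimes>\<^sub>M ?PI)"
    using Gm by measurable
  have "AE z in exp1 \<Otimes>\<^sub>M ?PI. fst z \<noteq> G (snd z)"
  proof -
    have "AE X in ?PI. AE x in exp1. x \<noteq> G X" by (intro AE_I2 AE_exp1_neq)
    then have "AE x in exp1. AE X in ?PI. x \<noteq> G X"
      using AE_commute[of "\<lambda>x X. x \<noteq> G X", OF setm] by simp
    then show ?thesis using AE_pair_iff[of "\<lambda>x X. x \<noteq> G X", OF setm] by simp
  qed
  moreover have "fst z \<noteq> G (snd z) \<longleftrightarrow> (case z of (x, X) \<Rightarrow> X(j := x)) j \<noteq> F (case z of (x, X) \<Rightarrow> X(j := x))" for z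
  proof -
    obtain x X where z: "z = (x, X)" by (cases z)
    have "F (X(j := x)) = F ((X(j := x))(j := 0))" using Fi by metis
    then show ?thesis by (simp add: z G_def)
  qed
  ultimately have "AE z in exp1 \<Otimes>\<^sub>M ?PI. (case z of (x, X) \<Rightarrow> X(j := x)) j \<noteq> F (case z of (x, X) \<Rightarrow> X(j := x))"
    by simp
  then have "AE E in distr (exp1 \<Otimes>\<^sub>M ?PI) clock_space (\<lambda>(x, X). X(j := x)). E j \<noteq> F E"
    by (subst AE_distr_iff[OF gm Pm])
  then show ?thesis unfolding eq .
qed


lemma PP: "product_prob_space (\<lambda>_::int\<times>nat. exp1)"
  by (simp add: product_prob_space_def product_prob_space_axioms_def product_sigma_finite_def
      prob_space_exp1 prob_space_imp_sigma_finite)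

lemma INF_AE:
  fixes X :: "int set"
  assumes X: "infinite X" and c: "0 \<le> c"
  shows "AE E in clock_space. \<exists>x\<in>X. c < E (x, 0)"
proof -
  interpret PP: product_prob_space "\<lambda>_::int\<times>nat. exp1" UNIV by (rule PP)
  interpret C: prob_space clock_space by (rule prob_space_C)
  define A where "A = {E \<in> space clock_space. \<forall>x\<in>X. E (x, 0) \<le> c}"
  have Am: "A \<in> sets clock_space" unfolding A_def clock_space_def by measurable
  define p where "p = 1 - exp (- c)"
  have p: "0 \<le> p" "p < 1" using c by (auto simp: p_def)
  have bound: "C.prob A \<le> p ^ L" for L
  proof -
    obtain B where B: "finite B" "card B = L" "B \<subseteq> X" using infinite_arbitrarily_large[OF X] by blast
    define J where "J = B \<times> {0::nat}"
    have J: "finite J" "card J = L" using B by (auto simp: J_def card_cartesian_product)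
    define AL where "AL = {E \<in> space clock_space. \<forall>j\<in>J. E j \<in> {..c}}"
    have sub: "A \<subseteq> AL" using B by (auto simp: A_def AL_def J_def)
    have "emeasure clock_space AL = (\<Prod>j\<in>J. emeasure exp1 {..c})"
      unfolding AL_def clock_space_def by (rule PP.emeasure_PiM_Collect) (use J in auto)
    also have "\<dots> = ennreal (p ^ L)"
      using J c p by (simp add: emeasure_exp1_le p_def prod_ennreal ennreal_power)
    finally have "C.prob AL = p ^ L" using p by (simp add: C.emeasure_eq_measure)
    moreover have "AL \<in> sets clock_space" unfolding AL_def clock_space_def by measurable
    ultimately show ?thesis using C.finite_measure_mono[OF sub] by simp
  qed
  have "C.prob A = 0"
  proof (rule ccontr)
    assume "C.prob A \<noteq> 0"
    then have "0 < C.prob A" using measure_nonneg[of clock_space A] by linarith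
    then obtain L where "p ^ L < C.prob A" using real_arch_pow_inv[OF _ p(2)] by blast
    then show False using bound[of L] by simp
  qed
  then have "A \<in> null_sets clock_space" using Am by (simp add: C.emeasure_eq_measure null_sets_def)
  then show ?thesis by (rule AE_I') (auto simp: A_def not_less)
qed


definition Ssum :: "(int \<times> nat \<Rightarrow> real) \<Rightarrow> int \<Rightarrow> nat \<Rightarrow> real" where
  "Ssum E x n = (\<Sum>i\<le>n. E (x, i))"

lemma Ssum_split: "Ssum E x n = E (x, 0) + (\<Sum>i\<in>{1..n}. E (x, i))"
proof -
  have "{..n} = insert 0 {1..n}" by auto
  then show ?thesis by (simp add: Ssum_def)
qed

lemma Ssum_ge: "(\<forall>j. 0 < E j) \<Longrightarrow> E (x, 0) \<le> Ssum E x n"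
  unfolding Ssum_split by (intro add_increasing2 sum_nonneg) (auto intro: less_imp_le)

lemma Ssum_meas[measurable]: "(\<lambda>E. Ssum E x n) \<in> borel_measurable clock_space"
  unfolding Ssum_def clock_space_def by measurable

lemma AE_pos: "AE E in clock_space. \<forall>j. 0 < E j"
proof -
  interpret PP: product_prob_space "\<lambda>_::int\<times>nat. exp1" UNIV by (rule PP)
  show ?thesis
    unfolding AE_all_countable clock_space_def
    by (intro allI PP.AE_component[OF _ AE_exp1_pos]) simp
qed

lemma AE_distinct_one:
  assumes "x \<noteq> y"
  shows "AE E in clock_space. Ssum E x n \<noteq> Ssum E y m"
proof -
  define F where "F E = Ssum E y m - (\<Sum>i\<in>{1..n}. E (x, i))" for E
  have Fm: "F \<in> borel_measurable clock_space" unfolding F_def clock_space_def Ssum_def by measurable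
  have Fi: "\<forall>E v. F (E((x,0) := v)) = F E"
    using assms by (auto simp: F_def Ssum_def intro!: sum.cong)
  have "AE E in clock_space. E (x,0) \<noteq> F E" by (rule KL[OF Fm Fi])
  then show ?thesis by eventually_elim (auto simp: F_def Ssum_split[of _ x n])
qed

lemma AE_distinct: "AE E in clock_space. \<forall>x y n m. x \<noteq> y \<longrightarrow> Ssum E x n \<noteq> Ssum E y m"
  unfolding AE_all_countable
proof (intro allI)
  fix x y :: int and n m :: nat
  show "AE E in clock_space. x \<noteq> y \<longrightarrow> Ssum E x n \<noteq> Ssum E y m"
  proof (cases "x = y")
    case True then show ?thesis by simp
  next
    case False then show ?thesis using AE_distinct_one[OF False] by eventually_elim simp
  qed
qed


lemma infinite_below:
  fixes X :: "int set"
  assumes "\<forall>j::nat. \<exists>x\<in>X. x \<le> m - int j"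
  shows "infinite X"
proof
  assume "finite X"
  then have l: "\<forall>x\<in>X. Min X \<le> x" using Min_le by blast
  obtain x where "x \<in> X" "x \<le> m - int (nat (m - Min X + 1))" using assms by blast
  moreover have "Min X \<le> x" using l \<open>x \<in> X\<close> by blast
  moreover have "int (nat (m - Min X + 1)) \<ge> m - Min X + 1" by simp
  ultimately show False by linarith
qed

lemma infinite_above:
  fixes X :: "int set"
  assumes "\<forall>j::nat. \<exists>x\<in>X. x \<ge> m + int j"
  shows "infinite X"
proof
  assume "finite X"
  then have l: "\<forall>x\<in>X. x \<le> Max X" using Max_ge by blast
  obtain x where "x \<in> X" "x \<ge> m + int (nat (Max X - m + 1))" using assms by blast
  moreover have "x \<le> Max X" using l \<open>x \<in> X\<close> by blast
  moreover have "int (nat (Max X - m + 1)) \<ge> Max X - m + 1" by simp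
  ultimately show False by linarith
qed

lemma inf_Iic: "infinite {..(a::int)}"
  by (rule infinite_below[of _ a]) auto

lemma inf_Ici: "infinite {(a::int)..}"
  by (rule infinite_above[of _ a]) auto

lemma pair_C: "pair_sigma_finite clock_space clock_space"
proof -
  interpret C: prob_space clock_space by (rule prob_space_C)
  show ?thesis by unfold_locales
qed

lemma AE_cross:
  assumes q: "0 < q"
  shows "AE z in clock_space \<Otimes>\<^sub>M clock_space. \<forall>x y n m. Ssum (fst z) x n \<noteq> Ssum (snd z) y m / q"
proof -
  interpret pair_sigma_finite clock_space clock_space by (rule pair_C)
  have setm: "{z \<in> space (clock_space \<Otimes>\<^sub>M clock_space). (\<lambda>E1 E2. \<forall>x y n m. Ssum E1 x n \<noteq> Ssum E2 y m / q) (fst z) (snd z)}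
     \<in> sets (clock_space \<Otimes>\<^sub>M clock_space)"
    by measurable
  have "AE E1 in clock_space. AE E2 in clock_space. \<forall>x y n m. Ssum E1 x n \<noteq> Ssum E2 y m / q"
  proof (rule AE_I2)
    fix E1 :: "int \<times> nat \<Rightarrow> real" assume "E1 \<in> space clock_space"
    have one: "AE E2 in clock_space. Ssum E1 x n \<noteq> Ssum E2 y m / q" for x y :: int and n m :: nat
    proof -
      define F where "F E = q * Ssum E1 x n - (\<Sum>i\<in>{1..m}. E (y, i))" for E
      have Fm: "F \<in> borel_measurable clock_space" unfolding F_def clock_space_def by measurable
      have Fi: "\<forall>E v. F (E((y,0) := v)) = F E" by (auto simp: F_def intro!: sum.cong)
      have "AE E in clock_space. E (y,0) \<noteq> F E" by (rule KL[OF Fm Fi])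
      then show "AE E2 in clock_space. Ssum E1 x n \<noteq> Ssum E2 y m / q"
      proof eventually_elim
        case (elim E)
        then have "Ssum E y m \<noteq> q * Ssum E1 x n" by (auto simp: F_def Ssum_split[of _ y m])
        then show ?case using q by (auto simp: field_simps)
      qed
    qed
    show "AE E2 in clock_space. \<forall>x y n m. Ssum E1 x n \<noteq> Ssum E2 y m / q"
      unfolding AE_all_countable using one by blast
  qed
  then show ?thesis using AE_pair_iff[OF setm] by simp
qed

lemma AE_block:
  assumes q: "0 \<le> q"
  shows "AE z in clock_space \<Otimes>\<^sub>M clock_space. \<forall>T::nat. \<forall>m::int.
     (\<exists>x\<le>m. real T < fst z (x,0) \<and> q * real T < snd z (x,0)) \<and>
     (\<exists>x\<ge>m. real T < fst z (x,0) \<and> q * real T < snd z (x,0))"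
proof -
  interpret pair_sigma_finite clock_space clock_space by (rule pair_C)
  let ?Q = "\<lambda>E1 E2. \<forall>T::nat. \<forall>m::int.
     (\<exists>x\<le>m. real T < E1 (x,0) \<and> q * real T < E2 (x,0)) \<and>
     (\<exists>x\<ge>m. real T < E1 (x,0) \<and> q * real T < E2 (x,0))"
  have setm: "{z \<in> space (clock_space \<Otimes>\<^sub>M clock_space). ?Q (fst z) (snd z)} \<in> sets (clock_space \<Otimes>\<^sub>M clock_space)"
    unfolding clock_space_def by measurable
  have A1: "AE E1 in clock_space. \<forall>T::nat. \<forall>m::int. \<forall>j::nat.
      (\<exists>x\<in>{..m - int j}. real T < E1 (x,0)) \<and> (\<exists>x\<in>{m + int j..}. real T < E1 (x,0))"
    unfolding AE_all_countable AE_conj_iff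
    by (intro allI conjI INF_AE inf_Iic inf_Ici) simp_all
  have "AE E1 in clock_space. AE E2 in clock_space. ?Q E1 E2"
    using A1
  proof eventually_elim
    case (elim E1)
    show ?case
      unfolding AE_all_countable AE_conj_iff
    proof (intro allI conjI)
      fix T :: nat and m :: int
      define X where "X = {x. x \<le> m \<and> real T < E1 (x,0)}"
      have "infinite X"
      proof (rule infinite_below[of _ m], intro allI)
        fix j :: nat
        obtain x where x: "x \<in> {..m - int j}" "real T < E1 (x,0)" using elim by blast
        then show "\<exists>x\<in>X. x \<le> m - int j" by (intro bexI[of _ x]) (auto simp: X_def)
      qed
      then have "AE E2 in clock_space. \<exists>x\<in>X. q * real T < E2 (x,0)" by (rule INF_AE) (use q in simp)
      then show "AE E2 in clock_space. \<exists>x\<le>m. real T < E1 (x,0) \<and> q * real T < E2 (x,0)"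
        by eventually_elim (auto simp: X_def)
      define Y where "Y = {x. x \<ge> m \<and> real T < E1 (x,0)}"
      have "infinite Y"
      proof (rule infinite_above[of _ m], intro allI)
        fix j :: nat
        obtain x where x: "x \<in> {m + int j..}" "real T < E1 (x,0)" using elim by blast
        then show "\<exists>x\<in>Y. x \<ge> m + int j" by (intro bexI[of _ x]) (auto simp: Y_def)
      qed
      then have "AE E2 in clock_space. \<exists>x\<in>Y. q * real T < E2 (x,0)" by (rule INF_AE) (use q in simp)
      then show "AE E2 in clock_space. \<exists>x\<ge>m. real T < E1 (x,0) \<and> q * real T < E2 (x,0)"
        by eventually_elim (auto simp: Y_def)
    qed
  qed
  then show ?thesis using AE_pair_iff[OF setm] by simp
qed




lemma finite_perms: "finite (perms N)"
proof -
  let ?S = "{1..int N}"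
  have "perms N \<subseteq> (\<lambda>g x. if x \<in> ?S then g x else x) ` (?S \<rightarrow>\<^sub>E ?S)"
  proof
    fix w assume w: "w \<in> perms N"
    then have "restrict w ?S \<in> ?S \<rightarrow>\<^sub>E ?S" unfolding perms_def bij_betw_def by auto
    moreover have "w = (\<lambda>x. if x \<in> ?S then restrict w ?S x else x)"
      using w unfolding perms_def by (auto simp: fun_eq_iff)
    ultimately show "w \<in> (\<lambda>g x. if x \<in> ?S then g x else x) ` (?S \<rightarrow>\<^sub>E ?S)" by blast
  qed
  moreover have "finite ((\<lambda>g x. if x \<in> ?S then g x else x) ` (?S \<rightarrow>\<^sub>E ?S))"
    by (intro finite_imageI finite_PiE) auto
  ultimately show ?thesis by (rule finite_subset)
qed

lemma mallows_sf: "sigma_finite_measure (mallows N q)"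
proof -
  let ?f = "\<lambda>w. ennreal (mallows_weight N q w / (\<Sum>v\<in>perms N. mallows_weight N q v))"
  have "emeasure (mallows N q) (space (mallows N q)) = (\<integral>\<^sup>+ w. ?f w * indicator UNIV w \<partial>count_space UNIV)"
    unfolding mallows_def by (subst emeasure_density) auto
  also have "\<dots> = (\<integral>\<^sup>+ w. ?f w \<partial>count_space UNIV)" by simp
  also have "\<dots> = (\<Sum>w\<in>perms N. ?f w)"
    by (rule nn_integral_count_space'[OF finite_perms]) (auto simp: mallows_weight_def)
  finally have "emeasure (mallows N q) (space (mallows N q)) \<noteq> \<top>"
    by (simp add: ennreal_sum_eq_top[OF finite_perms])
  then interpret finite_measure "mallows N q" by (intro finite_measureI) simp
  show ?thesis by unfold_locales
qed

lemma AE_mallows: "AE w in mallows N q. w \<in> perms N"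
  unfolding mallows_def
  by (subst AE_density) (auto simp: mallows_weight_def)

lemma lift_fst:
  assumes sf: "sigma_finite_measure M2" and ae: "AE x in M1. P x"
  shows "AE z in M1 \<Otimes>\<^sub>M M2. P (fst z)"
proof -
  interpret sigma_finite_measure M2 by (rule sf)
  from ae obtain N where N: "{x\<in>space M1. \<not> P x} \<subseteq> N" "emeasure M1 N = 0" "N \<in> sets M1" by (rule AE_E)
  have "N \<times> space M2 \<in> null_sets (M1 \<Otimes>\<^sub>M M2)"
    by (rule times_in_null_sets1) (use N in auto)
  then show ?thesis by (rule AE_I') (use N in \<open>auto simp: space_pair_measure\<close>)
qed

lemma lift_snd:
  assumes sf: "sigma_finite_measure M2" and ae: "AE x in M2. P x"
  shows "AE z in M1 \<Otimes>\<^sub>M M2. P (snd z)"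
proof -
  interpret sigma_finite_measure M2 by (rule sf)
  from ae obtain N where N: "{x\<in>space M2. \<not> P x} \<subseteq> N" "emeasure M2 N = 0" "N \<in> sets M2" by (rule AE_E)
  have "space M1 \<times> N \<in> null_sets (M1 \<Otimes>\<^sub>M M2)"
    by (rule times_in_null_sets2) (use N in auto)
  then show ?thesis by (rule AE_I') (use N in \<open>auto simp: space_pair_measure\<close>)
qed

lemma arrivals_iff: "(x, s) \<in> arrivals r E \<longleftrightarrow> 0 < r \<and> (\<exists>n. s = Ssum E x n / r)"
  by (simp add: arrivals_def Ssum_def)

lemma noring_of:
  assumes p1: "\<forall>j. 0 < E1 j" and p2: "\<forall>j. 0 < E2 j" and q: "0 \<le> q"
    and a: "T < E1 (x,0)" "q * T < E2 (x,0)"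
  shows "noring (arrivals 1 E1) (arrivals q E2) x T"
  unfolding noring_def
proof (intro allI impI conjI)
  fix s assume s: "0 < s \<and> s \<le> T"
  show "(x, s) \<notin> arrivals 1 E1"
  proof
    assume "(x, s) \<in> arrivals 1 E1"
    then obtain n where "s = Ssum E1 x n" by (auto simp: arrivals_iff)
    then show False using Ssum_ge[OF p1, of x n] a s by simp
  qed
  show "(x, s) \<notin> arrivals q E2"
  proof
    assume "(x, s) \<in> arrivals q E2"
    then obtain n where n: "s = Ssum E2 x n / q" and qp: "0 < q" by (auto simp: arrivals_iff)
    then have "s * q = Ssum E2 x n" by simp
    moreover have "q * T < Ssum E2 x n" using Ssum_ge[OF p2, of x n] a by simp
    moreover have "s * q \<le> T * q" using s qp by (intro mult_right_mono) auto
    ultimately show False by (simp add: mult.commute)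
  qed
qed

lemma goods:
  assumes p1: "\<forall>j. 0 < E1 j" and p2: "\<forall>j. 0 < E2 j" and q: "0 \<le> q"
    and d1: "\<forall>x y n m. x \<noteq> y \<longrightarrow> Ssum E1 x n \<noteq> Ssum E1 y m"
    and d2: "\<forall>x y n m. x \<noteq> y \<longrightarrow> Ssum E2 x n \<noteq> Ssum E2 y m"
    and cr: "0 < q \<longrightarrow> (\<forall>x y n m. Ssum E1 x n \<noteq> Ssum E2 y m / q)"
    and bl: "\<forall>T::nat. \<forall>m::int.
     (\<exists>x\<le>m. real T < E1 (x,0) \<and> q * real T < E2 (x,0)) \<and>
     (\<exists>x\<ge>m. real T < E1 (x,0) \<and> q * real T < E2 (x,0))"
  shows "\<forall>x y t. ((x,t) \<in> arrivals 1 E1 \<or> (x,t) \<in> arrivals q E2) \<and> ((y,t) \<in> arrivals 1 E1 \<or> (y,t) \<in> arrivals q E2) \<longrightarrow> x = y"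
    "\<forall>x t. \<not> ((x,t) \<in> arrivals 1 E1 \<and> (x,t) \<in> arrivals q E2)"
    "\<forall>T::nat. \<forall>m::int. (\<exists>x\<le>m. noring (arrivals 1 E1) (arrivals q E2) x (real T)) \<and>
        (\<exists>x\<ge>m. noring (arrivals 1 E1) (arrivals q E2) x (real T))"
proof -
  show "\<forall>x y t. ((x,t) \<in> arrivals 1 E1 \<or> (x,t) \<in> arrivals q E2) \<and> ((y,t) \<in> arrivals 1 E1 \<or> (y,t) \<in> arrivals q E2) \<longrightarrow> x = y"
  proof (intro allI impI)
    fix x y t assume H: "((x,t) \<in> arrivals 1 E1 \<or> (x,t) \<in> arrivals q E2) \<and> ((y,t) \<in> arrivals 1 E1 \<or> (y,t) \<in> arrivals q E2)"
    show "x = y"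
    proof (rule ccontr)
      assume xy: "x \<noteq> y"
      from H show False
      proof (elim conjE disjE)
        assume a: "(x,t) \<in> arrivals 1 E1" "(y,t) \<in> arrivals 1 E1"
        from a(1) obtain n where "t = Ssum E1 x n" by (auto simp: arrivals_iff)
        moreover from a(2) obtain m where "t = Ssum E1 y m" by (auto simp: arrivals_iff)
        ultimately have "Ssum E1 x n = Ssum E1 y m" by simp
        then show False using d1 xy by metis
      next
        assume a: "(x,t) \<in> arrivals 1 E1" "(y,t) \<in> arrivals q E2"
        from a(1) obtain n where "t = Ssum E1 x n" by (auto simp: arrivals_iff)
        moreover from a(2) obtain m where "t = Ssum E2 y m / q" "0 < q" by (auto simp: arrivals_iff)
        ultimately have "Ssum E1 x n = Ssum E2 y m / q" "0 < q" by simp_all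
        then show False using cr by metis
      next
        assume a: "(x,t) \<in> arrivals q E2" "(y,t) \<in> arrivals 1 E1"
        from a(2) obtain m where "t = Ssum E1 y m" by (auto simp: arrivals_iff)
        moreover from a(1) obtain n where "t = Ssum E2 x n / q" "0 < q" by (auto simp: arrivals_iff)
        ultimately have "Ssum E1 y m = Ssum E2 x n / q" "0 < q" by simp_all
        then show False using cr by metis
      next
        assume a: "(x,t) \<in> arrivals q E2" "(y,t) \<in> arrivals q E2"
        from a(1) obtain n where "t = Ssum E2 x n / q" "0 < q" by (auto simp: arrivals_iff)
        moreover from a(2) obtain m where "t = Ssum E2 y m / q" by (auto simp: arrivals_iff)
        ultimately have "Ssum E2 x n = Ssum E2 y m" by (simp add: divide_cancel_right)
        then show False using d2 xy by metis
      qed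
    qed
  qed
  show "\<forall>x t. \<not> ((x,t) \<in> arrivals 1 E1 \<and> (x,t) \<in> arrivals q E2)"
  proof (intro allI notI)
    fix x t assume a: "(x,t) \<in> arrivals 1 E1 \<and> (x,t) \<in> arrivals q E2"
    from a obtain n where "t = Ssum E1 x n" by (auto simp: arrivals_iff)
    moreover from a obtain m where "t = Ssum E2 x m / q" "0 < q" by (auto simp: arrivals_iff)
    ultimately have "Ssum E1 x n = Ssum E2 x m / q" "0 < q" by simp_all
    then show False using cr by metis
  qed
  show "\<forall>T::nat. \<forall>m::int. (\<exists>x\<le>m. noring (arrivals 1 E1) (arrivals q E2) x (real T)) \<and>
        (\<exists>x\<ge>m. noring (arrivals 1 E1) (arrivals q E2) x (real T))"
  proof (intro allI conjI)
    fix T :: nat and m :: int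
    obtain x where "x \<le> m" "real T < E1 (x,0)" "q * real T < E2 (x,0)" using bl by blast
    then show "\<exists>x\<le>m. noring (arrivals 1 E1) (arrivals q E2) x (real T)"
      using noring_of[OF p1 p2 q] by blast
    obtain x where "x \<ge> m" "real T < E1 (x,0)" "q * real T < E2 (x,0)" using bl by blast
    then show "\<exists>x\<ge>m. noring (arrivals 1 E1) (arrivals q E2) x (real T)"
      using noring_of[OF p1 p2 q] by blast
  qed
qed

theorem lemma2p2:
  fixes q :: real and N :: nat and lam0 :: "int \<Rightarrow> int"
  assumes "0 \<le> q" and "q < 1" and "lam0 \<in> perms N"
  shows "AE \<omega> in (clock_space \<Otimes>\<^sub>M clock_space) \<Otimes>\<^sub>M mallows N q.
    (let P1 = arrivals 1 (fst (fst \<omega>)); Pq = arrivals q (snd (fst \<omega>)); w = snd \<omega> in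
     \<forall>\<zeta> \<xi> lam \<xi>b.
       driven UNIV P1 Pq \<zeta> \<and> \<zeta> 0 = id \<and>
       driven {1..int N} P1 Pq \<xi> \<and> (\<forall>x\<in>{1..int N}. \<xi> 0 x = x) \<and>
       driven {1..int N} P1 Pq lam \<and> (\<forall>x\<in>{1..int N}. lam 0 x = lam0 x) \<and>
       driven {1..int N} P1 Pq \<xi>b \<and> (\<forall>x\<in>{1..int N}. \<xi>b 0 x = w x)
       \<longrightarrow> (\<forall>k\<in>{0..int N}. \<forall>t\<ge>0. \<forall>x.
             hN N k (\<xi> t) x \<le> hN N k (lam t) x \<and>
             hN N k (\<xi> t) x \<le> hZ k (\<zeta> t) x \<and>
             hN N k (\<xi> t) x \<le> hN N k (\<xi>b t) x))"
proof -
  note q = assms(1) and l0 = assms(3)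
  have sfM: "sigma_finite_measure (mallows N q)" by (rule mallows_sf)
  have sfC: "sigma_finite_measure clock_space" by (rule sigma_finite_C)
  let ?O = "(clock_space \<Otimes>\<^sub>M clock_space) \<Otimes>\<^sub>M mallows N q"
  have A1: "AE \<omega> in ?O. \<forall>j. 0 < fst (fst \<omega>) j"
    by (rule lift_fst[OF sfM, where P = "\<lambda>z. \<forall>j. 0 < fst z j"], rule lift_fst[OF sfC], rule AE_pos)
  have A2: "AE \<omega> in ?O. \<forall>j. 0 < snd (fst \<omega>) j"
    by (rule lift_fst[OF sfM, where P = "\<lambda>z. \<forall>j. 0 < snd z j"], rule lift_snd[OF sfC], rule AE_pos)
  have A3: "AE \<omega> in ?O. \<forall>x y n m. x \<noteq> y \<longrightarrow> Ssum (fst (fst \<omega>)) x n \<noteq> Ssum (fst (fst \<omega>)) y m"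
    by (rule lift_fst[OF sfM, where P = "\<lambda>z. \<forall>x y n m. x \<noteq> y \<longrightarrow> Ssum (fst z) x n \<noteq> Ssum (fst z) y m"],
        rule lift_fst[OF sfC], rule AE_distinct)
  have A4: "AE \<omega> in ?O. \<forall>x y n m. x \<noteq> y \<longrightarrow> Ssum (snd (fst \<omega>)) x n \<noteq> Ssum (snd (fst \<omega>)) y m"
    by (rule lift_fst[OF sfM, where P = "\<lambda>z. \<forall>x y n m. x \<noteq> y \<longrightarrow> Ssum (snd z) x n \<noteq> Ssum (snd z) y m"],
        rule lift_snd[OF sfC], rule AE_distinct)
  have A5: "AE \<omega> in ?O. 0 < q \<longrightarrow> (\<forall>x y n m. Ssum (fst (fst \<omega>)) x n \<noteq> Ssum (snd (fst \<omega>)) y m / q)"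
  proof (cases "0 < q")
    case True
    show ?thesis
      by (rule lift_fst[OF sfM, where P = "\<lambda>z. 0 < q \<longrightarrow> (\<forall>x y n m. Ssum (fst z) x n \<noteq> Ssum (snd z) y m / q)"])
         (use AE_cross[OF True] in simp)
  next
    case False then show ?thesis by simp
  qed
  have A6: "AE \<omega> in ?O. \<forall>T::nat. \<forall>m::int.
     (\<exists>x\<le>m. real T < fst (fst \<omega>) (x,0) \<and> q * real T < snd (fst \<omega>) (x,0)) \<and>
     (\<exists>x\<ge>m. real T < fst (fst \<omega>) (x,0) \<and> q * real T < snd (fst \<omega>) (x,0))"
    by (rule lift_fst[OF sfM, where P = "\<lambda>z. \<forall>T::nat. \<forall>m::int.
     (\<exists>x\<le>m. real T < fst z (x,0) \<and> q * real T < snd z (x,0)) \<and>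
     (\<exists>x\<ge>m. real T < fst z (x,0) \<and> q * real T < snd z (x,0))"], rule AE_block[OF q])
  have A7: "AE \<omega> in ?O. snd \<omega> \<in> perms N"
    by (rule lift_snd[OF sfM], rule AE_mallows)
  from A1 A2 A3 A4 A5 A6 A7 show ?thesis
  proof eventually_elim
    case (elim \<omega>)
    note G = goods[OF elim(1,2) q elim(3,4,5,6)]
    show ?case
      unfolding Let_def
      by (intro allI det[OF G elim(7) l0])
  qed
qed



end
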